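(* (i) Let $2\beta>\alpha>-1$. Then $$I_{\beta+1}=\sum_{n=0}^\infty\binom{\alpha-\beta+n-1}{n}\ell_n^{(\alpha)}$$ with convergence in $L^1(\mathbb R_+)$. In particular, for $\alpha>2$, $I_\alpha=\sum_{n=0}^\infty\ell_n^{(\alpha)}$ in $L^1(\mathbb R_+)$. (ii) For every $a>0$, $$e_a=\sum_{n=0}^\infty\frac{(a-\frac12)^n}{(a+\frac12)^{n+1}}\mathscr L_n^{(0)}$$ with convergence in $L^1(\mathbb R_+)$, where $e_a(t)=e^{-at}$.
   Context: $I_s(t):=\frac{1}{\Gamma(s)}e^{-t}t^{s-1}$ for $t>0$, $\Re s>0$. $L_n^{(\alpha)}(t)=\sum_{k=0}^n(-1)^k\binom{n+\alpha}{n-k}\frac{t^k}{k!}$ is the generalized Laguerre polynomial, and $\ell_n^{(\alpha)}(t):=\frac{n!}{\Gamma(n+\alpha+1)}t^{\alpha}e^{-t}L_n^{(\alpha)}(t)$ for $t>0$. $\mathscr L_n^{(0)}(t):=e^{-t/2}L_n^{(0)}(t)$. For real $x$, $\binom{x}{n}=\frac{x(x-1)\cdots(x-n+1)}{n!}$ and $\binom{x}{0}=1$. *)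

theory Defs
  imports "HOL-Analysis.Analysis"
begin

definition I_fun :: "real \<Rightarrow> real \<Rightarrow> real" where
  "I_fun s t = exp (- t) * t powr (s - 1) / Gamma s"

definition laguerre :: "nat \<Rightarrow> real \<Rightarrow> real \<Rightarrow> real" where
  "laguerre n \<alpha> t = (\<Sum>k\<le>n. (-1) ^ k * ((real n + \<alpha>) gchoose (n - k)) * t ^ k / fact k)"

definition ell :: "nat \<Rightarrow> real \<Rightarrow> real \<Rightarrow> real" where
  "ell n \<alpha> t = fact n / Gamma (real n + \<alpha> + 1) * t powr \<alpha> * exp (- t) * laguerre n \<alpha> t"

definition laguerre_fun :: "nat \<Rightarrow> real \<Rightarrow> real" where
  "laguerre_fun n t = exp (- t / 2) * laguerre n 0 t"

definition L1_sums :: "(nat \<Rightarrow> real \<Rightarrow> real) \<Rightarrow> (real \<Rightarrow> real) \<Rightarrow> bool" where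
  "L1_sums f g \<longleftrightarrow>
     ((\<lambda>N. \<integral>\<^sup>+ t \<in> {0<..}. ennreal \<bar>g t - (\<Sum>n<N. f n t)\<bar> \<partial>lborel) \<longlongrightarrow> 0) sequentially"

end

theory Submission
  imports Defs
begin

lemma int_bound1:
  fixes D h :: "real \<Rightarrow> real"
  assumes D: "integrable lborel D" and supp: "\<And>t. t \<le> 0 \<Longrightarrow> D t = 0"
    and hm: "h \<in> borel_measurable borel" and hb: "\<And>t. t > 0 \<Longrightarrow> \<bar>h t\<bar> \<le> 1"
  shows "integrable lborel (\<lambda>t. D t * h t)"
proof (rule Bochner_Integration.integrable_bound[OF D])
  show "(\<lambda>t. D t * h t) \<in> borel_measurable lborel" using D hm by measurable
  show "AE x in lborel. norm (D x * h x) \<le> norm (D x)"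
  proof (rule AE_I2)
    fix x show "norm (D x * h x) \<le> norm (D x)"
    proof (cases "x \<le> 0")
      case True thus ?thesis using supp by simp
    next
      case False
      hence "\<bar>h x\<bar> \<le> 1" using hb by simp
      thus ?thesis by (simp add: abs_mult mult_left_le)
    qed
  qed
qed

lemma int_exp1:
  fixes D :: "real \<Rightarrow> real"
  assumes D: "integrable lborel D" and supp: "\<And>t. t \<le> 0 \<Longrightarrow> D t = 0"
  shows "integrable lborel (\<lambda>t. D t * exp (-(real k * t)))"
  by (rule int_bound1[OF D supp]) auto

lemma mom_poly:
  fixes D :: "real \<Rightarrow> real"
  assumes D: "integrable lborel D" and supp: "\<And>t. t \<le> 0 \<Longrightarrow> D t = 0"
    and mom: "\<And>k::nat. (\<integral>t. D t * exp (-(real k * t)) \<partial>lborel) = 0"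
  shows "(\<integral>t. D t * (\<Sum>i\<le>n. a i * exp (-t) ^ i) \<partial>lborel) = 0"
proof -
  have e: "exp (-t) ^ i = exp (-(real i * t))" for t and i::nat
    by (simp add: exp_of_nat_mult[symmetric])
  have "(\<integral>t. D t * (\<Sum>i\<le>n. a i * exp (-t) ^ i) \<partial>lborel)
      = (\<integral>t. (\<Sum>i\<le>n. a i * (D t * exp (-(real i * t)))) \<partial>lborel)"
    by (simp add: e sum_distrib_left mult_ac)
  also have "\<dots> = (\<Sum>i\<le>n. \<integral>t. a i * (D t * exp (-(real i * t))) \<partial>lborel)"
    by (subst Bochner_Integration.integral_sum) (auto intro!: integrable_mult_right int_exp1[OF D supp])
  also have "\<dots> = 0" using mom by simp
  finally show ?thesis .
qed

lemma mom_cont: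
  fixes D :: "real \<Rightarrow> real"
  assumes D: "integrable lborel D" and supp: "\<And>t. t \<le> 0 \<Longrightarrow> D t = 0"
    and mom: "\<And>k::nat. (\<integral>t. D t * exp (-(real k * t)) \<partial>lborel) = 0"
    and phic: "continuous_on UNIV \<phi>" and phib: "\<And>u. \<bar>\<phi> u\<bar> \<le> 1"
  shows "(\<integral>t. D t * \<phi> (exp (-t)) \<partial>lborel) = 0"
proof -
  have phim: "(\<lambda>t. \<phi> (exp (-t))) \<in> borel_measurable borel"
    by (intro borel_measurable_continuous_onI continuous_on_compose2[OF phic]) (auto intro!: continuous_intros)
  have int1: "integrable lborel (\<lambda>t. D t * \<phi> (exp (-t)))"
    by (rule int_bound1[OF D supp phim]) (use phib in auto)
  let ?I = "\<integral>t. D t * \<phi> (exp (-t)) \<partial>lborel"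
  let ?N = "\<integral>t. \<bar>D t\<bar> \<partial>lborel"
  have le: "\<bar>?I\<bar> \<le> e * ?N" if e: "e > 0" for e
  proof -
    have "continuous_on {0..1} \<phi>" using phic continuous_on_subset by blast
    then obtain g where g: "real_polynomial_function g" and ge: "\<And>x. x \<in> {0..1} \<Longrightarrow> \<bar>\<phi> x - g x\<bar> < e"
      using Stone_Weierstrass_real_polynomial_function[of "{0..1::real}" \<phi> e] e by auto
    from g obtain a n where gs: "g = (\<lambda>x. \<Sum>i\<le>n. a i * x^i)"
      using real_polynomial_function_iff_sum by auto
    have gm: "(\<lambda>t. g (exp (-t))) \<in> borel_measurable borel" unfolding gs by measurable
    have ig: "integrable lborel (\<lambda>t. D t * g (exp (-t)))"
    proof -
      have e2: "exp (-t) ^ i = exp (-(real i * t))" for t and i::nat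
        by (simp add: exp_of_nat_mult[symmetric])
      have "integrable lborel (\<lambda>t. \<Sum>i\<le>n. a i * (D t * exp (-(real i * t))))"
        by (rule Bochner_Integration.integrable_sum) (auto intro!: integrable_mult_right int_exp1[OF D supp])
      thus ?thesis unfolding gs by (simp add: e2 sum_distrib_left mult_ac)
    qed
    have g0: "(\<integral>t. D t * g (exp (-t)) \<partial>lborel) = 0"
      unfolding gs by (rule mom_poly[OF D supp mom])
    have "?I = (\<integral>t. D t * \<phi> (exp (-t)) - D t * g (exp (-t)) \<partial>lborel)"
      using int1 ig g0 by simp
    also have "\<dots> = (\<integral>t. D t * (\<phi> (exp (-t)) - g (exp (-t))) \<partial>lborel)"
      by (simp add: algebra_simps)
    finally have "\<bar>?I\<bar> = \<bar>\<integral>t. D t * (\<phi> (exp (-t)) - g (exp (-t))) \<partial>lborel\<bar>" by simp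
    also have "\<dots> \<le> (\<integral>t. \<bar>D t * (\<phi> (exp (-t)) - g (exp (-t)))\<bar> \<partial>lborel)"
      by (rule integral_abs_bound)
    also have "\<dots> \<le> (\<integral>t. e * \<bar>D t\<bar> \<partial>lborel)"
    proof (rule Bochner_Integration.integral_mono)
      show "integrable lborel (\<lambda>t. \<bar>D t * (\<phi> (exp (-t)) - g (exp (-t)))\<bar>)"
        using int1 ig by (intro integrable_abs) (simp add: algebra_simps)
      show "integrable lborel (\<lambda>t. e * \<bar>D t\<bar>)" using D by auto
      fix t show "\<bar>D t * (\<phi> (exp (-t)) - g (exp (-t)))\<bar> \<le> e * \<bar>D t\<bar>"
      proof (cases "t \<le> 0")
        case True thus ?thesis using supp by simp
      next
        case False
        hence "exp (-t) \<in> {0..1}" by auto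
        hence "\<bar>\<phi> (exp (-t)) - g (exp (-t))\<bar> \<le> e" using ge less_imp_le by blast
        hence "\<bar>D t\<bar> * \<bar>\<phi> (exp (-t)) - g (exp (-t))\<bar> \<le> \<bar>D t\<bar> * e"
          by (intro mult_left_mono) auto
        thus ?thesis by (simp add: abs_mult mult.commute)
      qed
    qed
    also have "\<dots> = e * ?N" by simp
    finally show ?thesis .
  qed
  have "\<bar>?I\<bar> \<le> 0"
  proof (rule field_le_epsilon)
    fix e :: real assume e: "e > 0"
    have N0: "?N \<ge> 0" by simp
    show "\<bar>?I\<bar> \<le> 0 + e"
    proof (cases "?N = 0")
      case True thus ?thesis using le[of 1] e by simp
    next
      case False
      hence "?N > 0" using N0 by linarith
      hence "\<bar>?I\<bar> \<le> (e / ?N) * ?N" using le[of "e/?N"] e by simp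
      thus ?thesis using \<open>?N > 0\<close> by simp
    qed
  qed
  thus ?thesis by simp
qed

lemma mom_tail:
  fixes D :: "real \<Rightarrow> real"
  assumes D: "integrable lborel D" and supp: "\<And>t. t \<le> 0 \<Longrightarrow> D t = 0"
    and mom: "\<And>k::nat. (\<integral>t. D t * exp (-(real k * t)) \<partial>lborel) = 0"
  shows "(\<integral>t. D t * indicator {x<..} t \<partial>lborel) = 0"
proof (cases "x \<le> 0")
  case True
  have "(\<lambda>t. D t * indicator {x<..} t) = D"
  proof
    fix t show "D t * indicator {x<..} t = D t"
      using True supp[of t] by (cases "t \<le> 0") (auto simp: indicator_def)
  qed
  thus ?thesis using mom[of 0] by simp
next
  case False
  define c where "c = exp (-x)"
  define \<phi> where "\<phi> = (\<lambda>(j::nat) u. min 1 (max 0 (real j * (c - u))))"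
  have phic: "continuous_on UNIV (\<phi> j)" for j
    unfolding \<phi>_def by (intro continuous_intros)
  have phib: "\<bar>\<phi> j u\<bar> \<le> 1" for j u unfolding \<phi>_def by auto
  have zero: "(\<integral>t. D t * \<phi> j (exp (-t)) \<partial>lborel) = 0" for j
    by (rule mom_cont[OF D supp mom phic phib])
  have lim: "(\<lambda>j. \<phi> j (exp (-t))) \<longlonglongrightarrow> indicator {x<..} t" for t
  proof (cases "t > x")
    case True
    hence pos: "c - exp (-t) > 0" unfolding c_def by simp
    have "eventually (\<lambda>j. \<phi> j (exp (-t)) = 1) sequentially"
    proof -
      obtain N :: nat where N: "real N \<ge> 1 / (c - exp (-t))" using real_arch_simple by blast
      show ?thesis
      proof (rule eventually_sequentiallyI[of N])
        fix j assume "N \<le> j"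
        hence "real j \<ge> 1 / (c - exp (-t))" using N by linarith
        hence "real j * (c - exp (-t)) \<ge> 1" using pos by (simp add: field_simps)
        thus "\<phi> j (exp (-t)) = 1" unfolding \<phi>_def by simp
      qed
    qed
    hence "(\<lambda>j. \<phi> j (exp (-t))) \<longlonglongrightarrow> 1" by (rule tendsto_eventually)
    thus ?thesis using True by simp
  next
    case False
    hence "c - exp (-t) \<le> 0" unfolding c_def by simp
    hence "\<phi> j (exp (-t)) = 0" for j unfolding \<phi>_def
      by (simp add: mult_nonneg_nonpos)
    thus ?thesis using False by simp
  qed
  have "(\<lambda>j. \<integral>t. D t * \<phi> j (exp (-t)) \<partial>lborel) \<longlonglongrightarrow> (\<integral>t. D t * indicator {x<..} t \<partial>lborel)"
  proof (rule integral_dominated_convergence[where w = "\<lambda>t. \<bar>D t\<bar>"])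
    show "(\<lambda>t. D t * indicator {x<..} t) \<in> borel_measurable lborel" using D by measurable
    show "(\<lambda>t. D t * \<phi> j (exp (-t))) \<in> borel_measurable lborel" for j
      using D unfolding \<phi>_def by measurable
    show "integrable lborel (\<lambda>t. \<bar>D t\<bar>)" using D by auto
    show "AE t in lborel. (\<lambda>j. D t * \<phi> j (exp (-t))) \<longlonglongrightarrow> D t * indicator {x<..} t"
      by (intro AE_I2 tendsto_mult tendsto_const lim)
    show "AE t in lborel. norm (D t * \<phi> j (exp (-t))) \<le> \<bar>D t\<bar>" for j
    proof (rule AE_I2)
      fix t
      have "\<bar>D t\<bar> * \<bar>\<phi> j (exp (-t))\<bar> \<le> \<bar>D t\<bar> * 1" by (intro mult_left_mono phib) auto
      thus "norm (D t * \<phi> j (exp (-t))) \<le> \<bar>D t\<bar>" by (simp add: abs_mult)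
    qed
  qed
  hence "(\<lambda>j. 0::real) \<longlonglongrightarrow> (\<integral>t. D t * indicator {x<..} t \<partial>lborel)" using zero by simp
  thus ?thesis using LIMSEQ_const_iff by metis
qed

lemma laplace_unique:
  fixes D :: "real \<Rightarrow> real"
  assumes D: "integrable lborel D" and supp: "\<And>t. t \<le> 0 \<Longrightarrow> D t = 0"
    and mom: "\<And>k::nat. (\<integral>t. D t * exp (-(real k * t)) \<partial>lborel) = 0"
  shows "AE t in lborel. D t = 0"
proof -
  define P where "P t = max 0 (D t)" for t
  define Q where "Q t = max 0 (- D t)" for t
  have [measurable]: "D \<in> borel_measurable borel" using D by auto
  have iP: "integrable lborel P" unfolding P_def using D by auto
  have iQ: "integrable lborel Q" unfolding Q_def using D by auto
  have iPi: "integrable lborel (\<lambda>t. P t * indicator {x<..} t)" for x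
    using iP by (intro integrable_real_mult_indicator) auto
  have iQi: "integrable lborel (\<lambda>t. Q t * indicator {x<..} t)" for x
    using iQ by (intro integrable_real_mult_indicator) auto
  define M1 where "M1 = density lborel (\<lambda>t. ennreal (P t))"
  define M2 where "M2 = density lborel (\<lambda>t. ennreal (Q t))"
  have e1: "emeasure M1 {x<..} = ennreal (\<integral>t. P t * indicator {x<..} t \<partial>lborel)" for x
  proof -
    have "emeasure M1 {x<..} = (\<integral>\<^sup>+t. ennreal (P t) * indicator {x<..} t \<partial>lborel)"
      unfolding M1_def by (subst emeasure_density) (auto simp: P_def)
    also have "\<dots> = (\<integral>\<^sup>+t. ennreal (P t * indicator {x<..} t) \<partial>lborel)"
      by (intro nn_integral_cong) (auto simp: indicator_def)
    also have "\<dots> = ennreal (\<integral>t. P t * indicator {x<..} t \<partial>lborel)"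
      by (intro nn_integral_eq_integral iPi) (auto simp: P_def)
    finally show ?thesis .
  qed
  have e2: "emeasure M2 {x<..} = ennreal (\<integral>t. Q t * indicator {x<..} t \<partial>lborel)" for x
  proof -
    have "emeasure M2 {x<..} = (\<integral>\<^sup>+t. ennreal (Q t) * indicator {x<..} t \<partial>lborel)"
      unfolding M2_def by (subst emeasure_density) (auto simp: Q_def)
    also have "\<dots> = (\<integral>\<^sup>+t. ennreal (Q t * indicator {x<..} t) \<partial>lborel)"
      by (intro nn_integral_cong) (auto simp: indicator_def)
    also have "\<dots> = ennreal (\<integral>t. Q t * indicator {x<..} t \<partial>lborel)"
      by (intro nn_integral_eq_integral iQi) (auto simp: Q_def)
    finally show ?thesis .
  qed
  have eq: "(\<integral>t. P t * indicator {x<..} t \<partial>lborel) = (\<integral>t. Q t * indicator {x<..} t \<partial>lborel)" for x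
  proof -
    have "(\<integral>t. P t * indicator {x<..} t \<partial>lborel) - (\<integral>t. Q t * indicator {x<..} t \<partial>lborel)
        = (\<integral>t. P t * indicator {x<..} t - Q t * indicator {x<..} t \<partial>lborel)"
      using iPi iQi by simp
    also have "\<dots> = (\<integral>t. D t * indicator {x<..} t \<partial>lborel)"
      by (intro Bochner_Integration.integral_cong) (auto simp: P_def Q_def indicator_def)
    also have "\<dots> = 0" by (rule mom_tail[OF D supp mom])
    finally show ?thesis by simp
  qed
  have "M1 = M2"
  proof (rule measure_eqI_lessThan)
    show "sets M1 = sets borel" "sets M2 = sets borel" by (simp_all add: M1_def M2_def)
    show "emeasure M1 {x<..} < \<infinity>" for x using e1 by simp
    show "emeasure M1 {x<..} = emeasure M2 {x<..}" for x using e1 e2 eq by simp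
  qed
  hence "AE t in lborel. ennreal (P t) = ennreal (Q t)"
    unfolding M1_def M2_def by (intro sigma_finite_measure.density_unique[OF sigma_finite_lborel]) (auto simp: P_def Q_def)
  thus ?thesis
    by eventually_elim (auto simp: P_def Q_def max_def split: if_splits)
qed

lemma L1_sums_abstract:
  fixes f :: "nat \<Rightarrow> real \<Rightarrow> real" and g :: "real \<Rightarrow> real"
  assumes iF: "\<And>n. integrable lborel (\<lambda>t. indicator {0<..} t * f n t)"
    and iG: "integrable lborel (\<lambda>t. indicator {0<..} t * g t)"
    and sF: "summable (\<lambda>n. \<integral>t. \<bar>indicator {0<..} t * f n t\<bar> \<partial>lborel)"
    and lap: "\<And>k::nat. (\<lambda>n. \<integral>t. indicator {0<..} t * f n t * exp (-((real k + 1) * t)) \<partial>lborel)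
                 sums (\<integral>t. indicator {0<..} t * g t * exp (-((real k + 1) * t)) \<partial>lborel)"
  shows "L1_sums f g"
proof -
  define F where "F n t = indicator {0<..} t * f n t" for n t
  define G where "G t = indicator {0<..} t * g t" for t
  define a where "a n = (\<integral>t. \<bar>F n t\<bar> \<partial>lborel)" for n
  have iF': "integrable lborel (F n)" for n using iF unfolding F_def by simp
  have iG': "integrable lborel G" using iG unfolding G_def by simp
  have [measurable]: "F n \<in> borel_measurable borel" for n using iF' by auto
  have [measurable]: "G \<in> borel_measurable borel" using iG' by auto
  have sa: "summable a" using sF unfolding a_def F_def by simp
  have a0: "a n \<ge> 0" for n unfolding a_def by simp
  have nnF: "(\<integral>\<^sup>+t. ennreal \<bar>F n t\<bar> \<partial>lborel) = ennreal (a n)" for n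
    unfolding a_def by (intro nn_integral_eq_integral) (auto intro: iF')
  have suppF: "F n t = 0" if "t \<le> 0" for n t using that unfolding F_def by simp
  have suppG: "G t = 0" if "t \<le> 0" for t using that unfolding G_def by simp
  have "(\<integral>\<^sup>+t. (\<Sum>n. ennreal \<bar>F n t\<bar>) \<partial>lborel) = (\<Sum>n. \<integral>\<^sup>+t. ennreal \<bar>F n t\<bar> \<partial>lborel)"
    by (intro nn_integral_suminf) auto
  also have "\<dots> = ennreal (\<Sum>n. a n)" using nnF suminf_ennreal2[OF a0 sa] by simp
  finally have fin: "(\<integral>\<^sup>+t. (\<Sum>n. ennreal \<bar>F n t\<bar>) \<partial>lborel) \<noteq> \<infinity>" by simp
  have AEs: "AE t in lborel. summable (\<lambda>n. \<bar>F n t\<bar>)"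
  proof -
    have "AE t in lborel. (\<Sum>n. ennreal \<bar>F n t\<bar>) \<noteq> \<infinity>"
      by (rule nn_integral_PInf_AE[OF _ fin]) auto
    thus ?thesis by eventually_elim (auto intro: summable_suminf_not_top)
  qed
  have AEs': "AE t in lborel. summable (\<lambda>n. norm (F n t))" using AEs by simp
  define H where "H t = (\<Sum>n. F n t)" for t
  have iH: "integrable lborel H" unfolding H_def
    by (rule integrable_suminf[OF iF' AEs']) (use sa in \<open>simp add: a_def[abs_def]\<close>)
  have [measurable]: "H \<in> borel_measurable borel" using iH by auto
  have suppH: "H t = 0" if "t \<le> 0" for t using that suppF unfolding H_def by simp
  have lapH: "(\<integral>t. H t * exp (-((real k + 1) * t)) \<partial>lborel) = (\<integral>t. G t * exp (-((real k + 1) * t)) \<partial>lborel)"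
    for k :: nat
  proof -
    define e where "e t = exp (-((real k + 1) * t))" for t
    have eb: "\<bar>e t\<bar> \<le> 1" if "t > 0" for t unfolding e_def using that by simp
    have em[measurable]: "e \<in> borel_measurable borel" unfolding e_def by measurable
    have ie: "integrable lborel (\<lambda>t. F n t * e t)" for n
      by (rule int_bound1[OF iF' _ em]) (auto simp: suppF eb)
    have bnd: "\<bar>F n t * e t\<bar> \<le> \<bar>F n t\<bar>" for n t
      using suppF[of t n] eb[of t] by (cases "t \<le> 0") (auto simp: abs_mult mult_left_le)
    have AE2: "AE t in lborel. summable (\<lambda>n. norm (F n t * e t))"
      using AEs by eventually_elim (auto intro: summable_comparison_test[OF _] bnd
          simp: summable_comparison_test' bnd)
    have s2: "summable (\<lambda>n. \<integral>t. norm (F n t * e t) \<partial>lborel)"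
    proof (rule summable_comparison_test'[OF sa])
      fix n
      have "(\<integral>t. \<bar>F n t * e t\<bar> \<partial>lborel) \<le> a n"
        unfolding a_def using ie iF' bnd by (intro Bochner_Integration.integral_mono) auto
      thus "norm (\<integral>t. norm (F n t * e t) \<partial>lborel) \<le> a n" by simp
    qed
    have "(\<lambda>n. \<integral>t. F n t * e t \<partial>lborel) sums (\<integral>t. (\<Sum>n. F n t * e t) \<partial>lborel)"
      by (rule sums_integral[OF ie AE2 s2])
    moreover have "(\<integral>t. (\<Sum>n. F n t * e t) \<partial>lborel) = (\<integral>t. H t * e t \<partial>lborel)"
    proof (intro integral_cong_AE)
      show "AE t in lborel. (\<Sum>n. F n t * e t) = H t * e t"
        using AEs
      proof eventually_elim
        case (elim t)
        hence "summable (\<lambda>n. F n t)" by (rule summable_rabs_cancel)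
        thus ?case unfolding H_def by (rule suminf_mult2[symmetric])
      qed
      show "(\<lambda>t. \<Sum>n. F n t * e t) \<in> borel_measurable lborel" by measurable
      show "(\<lambda>t. H t * e t) \<in> borel_measurable lborel" by measurable
    qed
    moreover have "(\<lambda>n. \<integral>t. F n t * e t \<partial>lborel) sums (\<integral>t. G t * e t \<partial>lborel)"
      using lap[of k] unfolding F_def[abs_def] G_def[abs_def] e_def[abs_def] by (simp add: mult.assoc)
    ultimately have "(\<integral>t. H t * e t \<partial>lborel) = (\<integral>t. G t * e t \<partial>lborel)"
      using sums_unique2 by simp
    thus ?thesis unfolding e_def .
  qed
  define D where "D t = (G t - H t) * exp (-t)" for t
  have iD: "integrable lborel D" unfolding D_def
    by (rule int_bound1[where D="\<lambda>t. G t - H t"]) (use iG' iH suppG suppH in auto)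
  have suppD: "D t = 0" if "t \<le> 0" for t using that suppG suppH unfolding D_def by simp
  have momD: "(\<integral>t. D t * exp (-(real k * t)) \<partial>lborel) = 0" for k :: nat
  proof -
    have ee: "exp (-t) * exp (-(real k * t)) = exp (-((real k + 1) * t))" for t
      by (simp add: exp_add[symmetric] algebra_simps)
    have i1: "integrable lborel (\<lambda>t. G t * exp (-((real k + 1) * t)))"
      by (rule int_bound1[OF iG']) (auto simp: suppG)
    have i2: "integrable lborel (\<lambda>t. H t * exp (-((real k + 1) * t)))"
      by (rule int_bound1[OF iH]) (auto simp: suppH)
    have "(\<integral>t. D t * exp (-(real k * t)) \<partial>lborel)
        = (\<integral>t. G t * exp (-((real k + 1) * t)) - H t * exp (-((real k + 1) * t)) \<partial>lborel)"
      unfolding D_def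
    proof (intro Bochner_Integration.integral_cong refl)
      fix t
      have "(G t - H t) * exp (- t) * exp (- (real k * t)) = (G t - H t) * (exp (- t) * exp (- (real k * t)))"
        by simp
      also have "\<dots> = (G t - H t) * exp (-((real k + 1) * t))" by (simp only: ee)
      finally show "(G t - H t) * exp (- t) * exp (- (real k * t)) =
        G t * exp (-((real k + 1) * t)) - H t * exp (-((real k + 1) * t))" by (simp add: algebra_simps)
    qed
    also have "\<dots> = 0" using i1 i2 lapH[of k] by simp
    finally show ?thesis .
  qed
  have AED: "AE t in lborel. D t = 0"
    by (rule laplace_unique[OF iD]) (use suppD momD in auto)
  have AEGH: "AE t in lborel. G t = H t"
    using AED by eventually_elim (simp add: D_def)
  define T where "T N = (\<Sum>i. a (i + N))" for N
  have T0: "T \<longlonglongrightarrow> 0"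
  proof -
    have "T = (\<lambda>N. suminf a - (\<Sum>i<N. a i))"
    proof
      fix N show "T N = suminf a - (\<Sum>i<N. a i)"
        using suminf_split_initial_segment[OF sa, of N] unfolding T_def by linarith
    qed
    moreover have "(\<lambda>N. suminf a - (\<Sum>i<N. a i)) \<longlonglongrightarrow> suminf a - suminf a"
      by (intro tendsto_intros summable_LIMSEQ sa)
    ultimately show ?thesis by simp
  qed
  have bound: "(\<integral>\<^sup>+ t\<in>{0<..}. ennreal \<bar>g t - (\<Sum>n<N. f n t)\<bar> \<partial>lborel) \<le> ennreal (T N)" for N
  proof -
    have "(\<integral>\<^sup>+ t\<in>{0<..}. ennreal \<bar>g t - (\<Sum>n<N. f n t)\<bar> \<partial>lborel)
        = (\<integral>\<^sup>+ t. ennreal \<bar>G t - (\<Sum>n<N. F n t)\<bar> \<partial>lborel)"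
      by (intro nn_integral_cong) (auto simp: F_def G_def indicator_def)
    also have "\<dots> \<le> (\<integral>\<^sup>+ t. (\<Sum>i. ennreal \<bar>F (i + N) t\<bar>) \<partial>lborel)"
    proof (rule nn_integral_mono_AE)
      show "AE t in lborel. ennreal \<bar>G t - (\<Sum>n<N. F n t)\<bar> \<le> (\<Sum>i. ennreal \<bar>F (i + N) t\<bar>)"
        using AEs AEGH
      proof eventually_elim
        case (elim t)
        have s1: "summable (\<lambda>n. F n t)" using elim(1) by (rule summable_rabs_cancel)
        have s2: "summable (\<lambda>i. \<bar>F (i + N) t\<bar>)"
          using summable_ignore_initial_segment[OF elim(1), of N] by simp
        have "G t - (\<Sum>n<N. F n t) = (\<Sum>i. F (i + N) t)"
          using suminf_split_initial_segment[OF s1, of N] elim(2) unfolding H_def by simp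
        hence "\<bar>G t - (\<Sum>n<N. F n t)\<bar> \<le> (\<Sum>i. \<bar>F (i + N) t\<bar>)"
          using summable_rabs[OF s2] by simp
        hence "ennreal \<bar>G t - (\<Sum>n<N. F n t)\<bar> \<le> ennreal (\<Sum>i. \<bar>F (i + N) t\<bar>)"
          by (rule ennreal_leI)
        also have "\<dots> = (\<Sum>i. ennreal \<bar>F (i + N) t\<bar>)"
          by (rule suminf_ennreal2[symmetric]) (auto intro: s2)
        finally show ?case .
      qed
    qed
    also have "\<dots> = (\<Sum>i. \<integral>\<^sup>+ t. ennreal \<bar>F (i + N) t\<bar> \<partial>lborel)"
      by (intro nn_integral_suminf) auto
    also have "\<dots> = (\<Sum>i. ennreal (a (i + N)))" using nnF by simp
    also have "\<dots> = ennreal (T N)" unfolding T_def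
      by (rule suminf_ennreal2) (auto intro: a0 summable_ignore_initial_segment sa)
    finally show ?thesis .
  qed
  have "(\<lambda>N. ennreal (T N)) \<longlonglongrightarrow> ennreal 0" by (intro tendsto_ennrealI T0)
  hence "(\<lambda>N. ennreal (T N)) \<longlonglongrightarrow> 0" by simp
  note hT = this
  show ?thesis unfolding L1_sums_def
  proof (rule tendsto_sandwich[where f="\<lambda>_. 0" and h="\<lambda>N. ennreal (T N)"])
    show "\<forall>\<^sub>F N in sequentially. 0 \<le> (\<integral>\<^sup>+ t\<in>{0<..}. ennreal \<bar>g t - (\<Sum>n<N. f n t)\<bar> \<partial>lborel)"
      by simp
    show "\<forall>\<^sub>F N in sequentially. (\<integral>\<^sup>+ t\<in>{0<..}. ennreal \<bar>g t - (\<Sum>n<N. f n t)\<bar> \<partial>lborel) \<le> ennreal (T N)"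
      by (intro always_eventually allI bound)
  qed (use hT in auto)
qed

lemma gint_nn:
  fixes c s :: real
  assumes c: "c > -1" and s: "s > 0"
  shows "(\<integral>\<^sup>+t. ennreal (indicator {0<..} t * (t powr c * exp (-(s*t)))) \<partial>lborel)
         = ennreal (Gamma (c + 1) / s powr (c + 1))"
proof -
  let ?f = "\<lambda>t. ennreal (indicator {0<..} t * (t powr c * exp (-(s*t))))"
  have "(\<integral>\<^sup>+t. ?f t \<partial>lborel) = \<bar>1/s\<bar> * (\<integral>\<^sup>+x. ?f (0 + (1/s) * x) \<partial>lborel)"
    by (rule nn_integral_real_affine) (use s in auto)
  also have "(\<lambda>x. ?f (0 + (1/s) * x)) = (\<lambda>x. ennreal (s powr (-c)) * ennreal (indicator {0..} x * x powr (c + 1 - 1) / exp x))"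
  proof
    fix x
    show "?f (0 + (1/s) * x) = ennreal (s powr (-c)) * ennreal (indicator {0..} x * x powr (c + 1 - 1) / exp x)"
    proof (cases "x > 0")
      case True
      have "(x / s) powr c = s powr (-c) * x powr c"
        using True s by (simp add: powr_divide powr_minus field_simps)
      thus ?thesis using True s
        by (simp add: ennreal_mult'[symmetric] exp_minus field_simps)
    next
      case False
      hence "\<not> (x / s > 0)" using s by (simp add: zero_less_divide_iff)
      thus ?thesis using s False by (cases "x = 0") (auto simp: indicator_def)
    qed
  qed
  also have "(\<integral>\<^sup>+x. ennreal (s powr (-c)) * ennreal (indicator {0..} x * x powr (c + 1 - 1) / exp x) \<partial>lborel)
      = ennreal (s powr (-c)) * ennreal (Gamma (c + 1))"
  proof -
    have g: "Gamma (c + 1) = (\<integral>\<^sup>+x. ennreal (indicator {0..} x * x powr (c + 1 - 1) / exp x) \<partial>lborel)"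
      by (rule Gamma_conv_nn_integral_real) (use c in simp)
    show ?thesis by (subst nn_integral_cmult) (auto simp: g)
  qed
  also have "\<bar>1/s\<bar> * (ennreal (s powr (-c)) * ennreal (Gamma (c + 1))) = ennreal (Gamma (c + 1) / s powr (c + 1))"
    using s c by (simp add: ennreal_mult'[symmetric] powr_add powr_minus field_simps)
  finally show ?thesis .
qed

lemma gint:
  fixes c s :: real
  assumes c: "c > -1" and s: "s > 0"
  shows "integrable lborel (\<lambda>t. indicator {0<..} t * (t powr c * exp (-(s*t))))"
    and "(\<integral>t. indicator {0<..} t * (t powr c * exp (-(s*t))) \<partial>lborel) = Gamma (c + 1) / s powr (c + 1)"
proof -
  have "integrable lborel (\<lambda>t. indicator {0<..} t * (t powr c * exp (-(s*t)))) \<and>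
        (\<integral>t. indicator {0<..} t * (t powr c * exp (-(s*t))) \<partial>lborel) = Gamma (c + 1) / s powr (c + 1)"
    using gint_nn[OF c s]
    by (subst (asm) nn_integral_eq_integrable) (use c s in \<open>auto intro!: divide_nonneg_pos Gamma_real_nonneg\<close>)
  thus "integrable lborel (\<lambda>t. indicator {0<..} t * (t powr c * exp (-(s*t))))"
    and "(\<integral>t. indicator {0<..} t * (t powr c * exp (-(s*t))) \<partial>lborel) = Gamma (c + 1) / s powr (c + 1)"
    by auto
qed

lemma alt_diff_step:
  fixes f :: "nat \<Rightarrow> real"
  shows "(\<Sum>k\<le>Suc n. (-1)^k * real (Suc n choose k) * f k)
       = (\<Sum>k\<le>n. (-1)^k * real (n choose k) * (f k - f (Suc k)))"
proof -
  define h where "h j = (-1)^j * real (n choose j) * f j" for j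
  have B: "(\<Sum>k\<le>n. h (Suc k)) = (\<Sum>k\<le>n. h k) - f 0"
  proof -
    have "(\<Sum>k\<le>Suc n. h k) = h 0 + (\<Sum>k\<le>n. h (Suc k))" by (rule sum.atMost_Suc_shift)
    moreover have "(\<Sum>k\<le>Suc n. h k) = (\<Sum>k\<le>n. h k)" by (simp add: h_def)
    ultimately show ?thesis by (simp add: h_def)
  qed
  have "(\<Sum>k\<le>Suc n. (-1)^k * real (Suc n choose k) * f k)
      = f 0 + (\<Sum>k\<le>n. (-1)^(Suc k) * real (Suc n choose Suc k) * f (Suc k))"
    by (subst sum.atMost_Suc_shift) simp
  also have "\<dots> = f 0 + (\<Sum>k\<le>n. (-1)^(Suc k) * real (n choose k) * f (Suc k) + h (Suc k))"
    by (intro arg_cong2[where f="(+)"] refl sum.cong) (simp_all add: h_def algebra_simps)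
  also have "\<dots> = f 0 + (\<Sum>k\<le>n. (-1)^(Suc k) * real (n choose k) * f (Suc k)) + (\<Sum>k\<le>n. h (Suc k))"
    by (simp only: sum.distrib add.assoc)
  also have "\<dots> = (\<Sum>k\<le>n. (-1)^(Suc k) * real (n choose k) * f (Suc k)) + (\<Sum>k\<le>n. h k)"
    using B by simp
  also have "\<dots> = (\<Sum>k\<le>n. (-1)^k * real (n choose k) * (f k - f (Suc k)))"
    by (simp add: h_def sum.distrib[symmetric] algebra_simps)
  finally show ?thesis .
qed

definition S :: "nat \<Rightarrow> nat \<Rightarrow> real \<Rightarrow> real" where
  "S n m c = (\<Sum>k\<le>n. (-1)^k * real (n choose k) * pochhammer (c + real k) m)"

lemma S_formula:
  "S n m c = (-1)^n * (\<Prod>i<n. (real m - real i)) * pochhammer (c + real n) (m - n)"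
proof (induction n arbitrary: m c)
  case 0
  show ?case by (simp add: S_def)
next
  case (Suc n)
  have step: "S (Suc n) m c = (\<Sum>k\<le>n. (-1)^k * real (n choose k) *
       (pochhammer (c + real k) m - pochhammer (c + real (Suc k)) m))"
    unfolding S_def by (rule alt_diff_step)
  show ?case
  proof (cases m)
    case 0
    thus ?thesis using step by (auto simp: prod.lessThan_Suc_shift)
  next
    case (Suc m')
    have d: "pochhammer (c + real k) (Suc m') - pochhammer (c + real (Suc k)) (Suc m')
        = - real (Suc m') * pochhammer ((c + 1) + real k) m'" for k
    proof -
      have "pochhammer (c + real k) (Suc m') = (c + real k) * pochhammer (c + real k + 1) m'"
        by (rule pochhammer_rec)
      moreover have "pochhammer (c + real (Suc k)) (Suc m') = pochhammer (c + real k + 1) m' * (c + real k + 1 + real m')"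
        by (subst pochhammer_Suc) (simp add: add_ac)
      ultimately show ?thesis by (simp add: algebra_simps)
    qed
    have "S (Suc n) m c = (\<Sum>k\<le>n. (-1)^k * real (n choose k) * (- real (Suc m') * pochhammer ((c + 1) + real k) m'))"
      using step by (simp only: Suc d)
    also have "\<dots> = - real (Suc m') * S n m' (c + 1)"
      unfolding S_def by (simp add: sum_distrib_left mult_ac)
    also have "\<dots> = - real (Suc m') * ((-1)^n * (\<Prod>i<n. (real m' - real i)) * pochhammer (c + 1 + real n) (m' - n))"
      by (simp add: Suc.IH)
    also have "\<dots> = (-1)^(Suc n) * (\<Prod>i<Suc n. (real m - real i)) * pochhammer (c + real (Suc n)) (m - Suc n)"
    proof -
      have P: "(\<Prod>i<Suc n. (real m - real i)) = real m * (\<Prod>i<n. (real m' - real i))"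
        by (subst prod.lessThan_Suc_shift) (simp add: Suc)
      have Q: "pochhammer (c + real (Suc n)) (m - Suc n) = pochhammer (c + 1 + real n) (m' - n)"
        by (simp add: Suc add_ac)
      show ?thesis unfolding P Q by (simp add: Suc algebra_simps)
    qed
    finally show ?thesis .
  qed
qed

lemma S_less: "m < n \<Longrightarrow> S n m c = 0"
proof -
  assume "m < n"
  hence "(\<Prod>i<n. (real m - real i)) = 0"
    by (intro prod_zero) (auto intro!: bexI[of _ m])
  thus ?thesis by (simp add: S_formula)
qed

lemma S_eq: "S n n c = (-1)^n * fact n"
proof -
  have "(\<Prod>i<n. (real n - real i)) = fact n"
  proof -
    have "(\<Prod>i<n. (real n - real i)) = (\<Prod>i<n. real (n - i))"
      by (intro prod.cong) auto
    also have "\<dots> = real (\<Prod>i<n. (n - i))" by simp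
    also have "(\<Prod>i<n. (n - i)) = fact n"
      using fact_prod_rev[of n, where 'a=nat] by (simp add: atLeast0LessThan)
    finally show ?thesis by simp
  qed
  thus ?thesis by (simp add: S_formula)
qed

lemma coef_id:
  fixes \<alpha> :: real
  assumes a: "\<alpha> > -1" and k: "k \<le> n"
  shows "((real n + \<alpha>) gchoose (n - k)) / fact k
       = Gamma (real n + \<alpha> + 1) / fact n * real (n choose k) / Gamma (\<alpha> + 1 + real k)"
proof -
  have nz: "\<alpha> + 1 + real k \<notin> \<int>\<^sub>\<le>\<^sub>0" using a
    by (auto elim!: nonpos_Ints_cases)
  have "((real n + \<alpha>) gchoose (n - k)) = pochhammer (\<alpha> + 1 + real k) (n - k) / fact (n - k)"
    using k by (subst gbinomial_pochhammer') (simp add: of_nat_diff algebra_simps)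
  also have "pochhammer (\<alpha> + 1 + real k) (n - k) = Gamma (real n + \<alpha> + 1) / Gamma (\<alpha> + 1 + real k)"
    using k nz by (subst pochhammer_Gamma) (auto simp: of_nat_diff algebra_simps)
  finally have 1: "((real n + \<alpha>) gchoose (n - k)) = Gamma (real n + \<alpha> + 1) / Gamma (\<alpha> + 1 + real k) / fact (n - k)" .
  have 2: "real (n choose k) = fact n / (fact k * fact (n - k))"
    using k by (simp add: binomial_fact)
  have G: "Gamma (\<alpha> + 1 + real k) > 0" using a by (intro Gamma_real_pos) simp
  show ?thesis unfolding 1 2 using G by (simp add: field_simps)
qed

lemma gint_sum:
  fixes e a :: "'i \<Rightarrow> real" and s :: real
  assumes I: "finite I" and e: "\<And>i. i \<in> I \<Longrightarrow> e i > -1" and s: "s > 0"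
  shows "integrable lborel (\<lambda>t. indicator {0<..} t * (\<Sum>i\<in>I. a i * (t powr e i * exp (-(s*t)))))"
    and "(\<integral>t. indicator {0<..} t * (\<Sum>i\<in>I. a i * (t powr e i * exp (-(s*t)))) \<partial>lborel)
         = (\<Sum>i\<in>I. a i * (Gamma (e i + 1) / s powr (e i + 1)))"
proof -
  have eq: "(\<lambda>t. indicator {0<..} t * (\<Sum>i\<in>I. a i * (t powr e i * exp (-(s*t)))))
      = (\<lambda>t. \<Sum>i\<in>I. a i * (indicator {0<..} t * (t powr e i * exp (-(s*t)))))"
    by (simp add: sum_distrib_left mult_ac)
  have ii: "integrable lborel (\<lambda>t. a i * (indicator {0<..} t * (t powr e i * exp (-(s*t)))))" if "i \<in> I" for i
    using gint(1)[OF e[OF that] s] by simp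
  show "integrable lborel (\<lambda>t. indicator {0<..} t * (\<Sum>i\<in>I. a i * (t powr e i * exp (-(s*t)))))"
    unfolding eq by (rule Bochner_Integration.integrable_sum) (use ii in auto)
  show "(\<integral>t. indicator {0<..} t * (\<Sum>i\<in>I. a i * (t powr e i * exp (-(s*t)))) \<partial>lborel)
         = (\<Sum>i\<in>I. a i * (Gamma (e i + 1) / s powr (e i + 1)))"
    unfolding eq
    by (subst Bochner_Integration.integral_sum) (use ii gint(2)[OF e s] in auto)
qed

definition P :: "nat \<Rightarrow> real \<Rightarrow> real \<Rightarrow> real" where
  "P n \<alpha> t = (\<Sum>k\<le>n. (-1)^k * real (n choose k) / Gamma (\<alpha> + 1 + real k) * t ^ k)"

lemma laguerre_alt:
  assumes a: "\<alpha> > -1"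
  shows "laguerre n \<alpha> t = Gamma (real n + \<alpha> + 1) / fact n * P n \<alpha> t"
  unfolding laguerre_def P_def sum_distrib_left
proof (rule sum.cong[OF refl])
  fix k assume k: "k \<in> {..n}"
  have "(-1) ^ k * ((real n + \<alpha>) gchoose (n - k)) * t ^ k / fact k
      = (-1) ^ k * t ^ k * (((real n + \<alpha>) gchoose (n - k)) / fact k)" by simp
  also have "\<dots> = (-1) ^ k * t ^ k * (Gamma (real n + \<alpha> + 1) / fact n * real (n choose k) / Gamma (\<alpha> + 1 + real k))"
    using coef_id[OF a, of k n] k by simp
  finally show "(-1) ^ k * ((real n + \<alpha>) gchoose (n - k)) * t ^ k / fact k =
      Gamma (real n + \<alpha> + 1) / fact n * ((-1) ^ k * real (n choose k) / Gamma (\<alpha> + 1 + real k) * t ^ k)"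
    by simp
qed

lemma ell_alt:
  assumes a: "\<alpha> > -1"
  shows "ell n \<alpha> t = t powr \<alpha> * exp (-t) * P n \<alpha> t"
proof -
  have G: "Gamma (real n + \<alpha> + 1) > 0" using a by (intro Gamma_real_pos) simp
  show ?thesis unfolding ell_def laguerre_alt[OF a] using G by simp
qed

lemma S_Gamma:
  assumes a: "\<alpha> > -1"
  shows "(\<Sum>k\<le>n. (-1)^k * real (n choose k) / Gamma (\<alpha> + 1 + real k) * Gamma (\<alpha> + real k + real m + 1))
       = S n m (\<alpha> + 1)"
  unfolding S_def
proof (rule sum.cong[OF refl])
  fix k
  have nz: "\<alpha> + 1 + real k \<notin> \<int>\<^sub>\<le>\<^sub>0" using a by (auto elim!: nonpos_Ints_cases)
  have G: "Gamma (\<alpha> + 1 + real k) > 0" using a by (intro Gamma_real_pos) simp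
  have "pochhammer (\<alpha> + 1 + real k) m = Gamma (\<alpha> + 1 + real k + real m) / Gamma (\<alpha> + 1 + real k)"
    by (rule pochhammer_Gamma[OF nz])
  thus "(-1)^k * real (n choose k) / Gamma (\<alpha> + 1 + real k) * Gamma (\<alpha> + real k + real m + 1)
       = (-1)^k * real (n choose k) * pochhammer (\<alpha> + 1 + real k) m"
    using G by (simp add: add_ac)
qed

lemma norm_P:
  assumes a: "\<alpha> > -1"
  shows "integrable lborel (\<lambda>t. indicator {0<..} t * (t powr \<alpha> * exp (-t) * P n \<alpha> t ^ 2))"
    and "(\<integral>t. indicator {0<..} t * (t powr \<alpha> * exp (-t) * P n \<alpha> t ^ 2) \<partial>lborel) = fact n / Gamma (real n + \<alpha> + 1)"
proof -
  define c where "c k = (-1)^k * real (n choose k) / Gamma (\<alpha> + 1 + real k)" for k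
  have pw: "indicator {0<..} t * (t powr \<alpha> * exp (-t) * P n \<alpha> t ^ 2)
      = (\<Sum>m\<le>n. c m * (indicator {0<..} t * (\<Sum>k\<le>n. c k * (t powr (\<alpha> + real k + real m) * exp (-(1*t))))))" for t
  proof (cases "t > 0")
    case True
    have "t powr \<alpha> * exp (-t) * P n \<alpha> t ^ 2 = t powr \<alpha> * exp (-t) * ((\<Sum>m\<le>n. c m * t^m) * (\<Sum>k\<le>n. c k * t^k))"
      by (simp add: P_def c_def power2_eq_square mult_ac)
    also have "\<dots> = (\<Sum>m\<le>n. c m * (\<Sum>k\<le>n. c k * (t powr \<alpha> * t^k * t^m * exp (-t))))"
      by (simp add: sum_distrib_left sum_distrib_right mult_ac)
    also have "\<dots> = (\<Sum>m\<le>n. c m * (\<Sum>k\<le>n. c k * (t powr (\<alpha> + real k + real m) * exp (-(1*t)))))"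
      using True by (simp add: powr_add powr_realpow)
    finally show ?thesis using True by simp
  qed (simp)
  have ik: "integrable lborel (\<lambda>t. indicator {0<..} t * (\<Sum>k\<le>n. c k * (t powr (\<alpha> + real k + real m) * exp (-(1*t)))))" for m
    by (rule gint_sum(1)) (use a in auto)
  have vk: "(\<integral>t. indicator {0<..} t * (\<Sum>k\<le>n. c k * (t powr (\<alpha> + real k + real m) * exp (-(1*t)))) \<partial>lborel)
      = S n m (\<alpha> + 1)" for m
    by (subst gint_sum(2)) (use a in \<open>simp_all add: c_def S_Gamma[OF a, symmetric]\<close>)
  show "integrable lborel (\<lambda>t. indicator {0<..} t * (t powr \<alpha> * exp (-t) * P n \<alpha> t ^ 2))"
    unfolding pw by (rule Bochner_Integration.integrable_sum) (use ik in auto)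
  have "(\<integral>t. indicator {0<..} t * (t powr \<alpha> * exp (-t) * P n \<alpha> t ^ 2) \<partial>lborel)
      = (\<Sum>m\<le>n. c m * S n m (\<alpha> + 1))"
    unfolding pw by (subst Bochner_Integration.integral_sum) (use ik vk in auto)
  also have "\<dots> = c n * S n n (\<alpha> + 1)"
  proof -
    have "(\<Sum>m\<le>n. c m * S n m (\<alpha> + 1)) = (\<Sum>m\<in>{n}. c m * S n m (\<alpha> + 1))"
      by (rule sum.mono_neutral_right) (auto simp: S_less)
    thus ?thesis by simp
  qed
  also have "\<dots> = fact n / Gamma (real n + \<alpha> + 1)"
    by (simp add: c_def S_eq add_ac)
  finally show "(\<integral>t. indicator {0<..} t * (t powr \<alpha> * exp (-t) * P n \<alpha> t ^ 2) \<partial>lborel) = fact n / Gamma (real n + \<alpha> + 1)" .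
qed

lemma rGs_eq: "n > 0 \<Longrightarrow> rGamma_series (z::real) n = pochhammer z (Suc n) / (fact n * real n powr z)"
  by (simp add: rGamma_series_def powr_def)

lemma poch_upper:
  fixes z :: real
  shows "\<exists>B N. \<forall>n\<ge>N. \<bar>pochhammer z n\<bar> \<le> B * fact n * real n powr (z - 1)"
proof -
  have "convergent (rGamma_series z)" using rGamma_series_LIMSEQ by (auto simp: convergent_def)
  hence "Bseq (rGamma_series z)" by (rule convergent_imp_Bseq)
  then obtain B0 where B0: "B0 > 0" "\<And>n. norm (rGamma_series z n) \<le> B0" by (auto simp: Bseq_def)
  obtain N :: nat where N: "real N \<ge> 2 * \<bar>z\<bar> + 1" using real_arch_simple by blast
  have "\<forall>n\<ge>N. \<bar>pochhammer z n\<bar> \<le> (2 * B0) * fact n * real n powr (z - 1)"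
  proof (intro allI impI)
    fix n assume n: "n \<ge> N"
    hence npos: "real n > 0" using N by linarith
    have zn: "\<bar>z + real n\<bar> \<ge> real n / 2" using n N by linarith
    have pos: "fact n * real n powr z > 0" using npos by simp
    have "pochhammer z (Suc n) = rGamma_series z n * (fact n * real n powr z)"
      using npos pos by (simp add: rGs_eq)
    hence "\<bar>pochhammer z (Suc n)\<bar> = \<bar>rGamma_series z n\<bar> * (fact n * real n powr z)"
      using pos by (simp add: abs_mult)
    also have "\<dots> \<le> B0 * (fact n * real n powr z)"
      using B0(2)[of n] pos by (intro mult_right_mono) auto
    finally have 1: "\<bar>pochhammer z (Suc n)\<bar> \<le> B0 * (fact n * real n powr z)" .
    have "\<bar>pochhammer z (Suc n)\<bar> = \<bar>pochhammer z n\<bar> * \<bar>z + real n\<bar>"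
      by (simp add: pochhammer_Suc abs_mult)
    moreover have "\<bar>pochhammer z n\<bar> * (real n / 2) \<le> \<bar>pochhammer z n\<bar> * \<bar>z + real n\<bar>"
      using zn by (intro mult_left_mono) auto
    ultimately have 2: "\<bar>pochhammer z n\<bar> * (real n / 2) \<le> B0 * (fact n * real n powr z)"
      using 1 by linarith
    have 3: "real n powr z = real n * real n powr (z - 1)"
      using npos by (simp add: powr_diff)
    have "\<bar>pochhammer z n\<bar> * real n \<le> (2 * B0 * fact n * real n powr (z - 1)) * real n"
      using 2 unfolding 3 by (simp add: field_simps)
    thus "\<bar>pochhammer z n\<bar> \<le> (2 * B0) * fact n * real n powr (z - 1)"
      using npos by (simp add: mult_le_cancel_right)
  qed
  thus ?thesis by blast
qed

lemma poch_lower: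
  fixes z :: real
  assumes z: "z > 0"
  shows "\<exists>b>0. \<exists>N. \<forall>n\<ge>N. pochhammer z n \<ge> b * fact n * real n powr (z - 1)"
proof -
  have r: "rGamma z > 0" using z by (simp add: rGamma_inverse_Gamma)
  have "eventually (\<lambda>n. rGamma_series z n > rGamma z / 2) sequentially"
    using rGamma_series_LIMSEQ[of z] r by (intro order_tendstoD(1)) auto
  then obtain N0 where N0: "\<And>n. n \<ge> N0 \<Longrightarrow> rGamma_series z n > rGamma z / 2"
    by (auto simp: eventually_sequentially)
  obtain N1 :: nat where N1: "real N1 \<ge> z + 1" using real_arch_simple by blast
  define N where "N = max N0 N1"
  have "\<forall>n\<ge>N. pochhammer z n \<ge> (rGamma z / 4) * fact n * real n powr (z - 1)"
  proof (intro allI impI)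
    fix n assume n: "n \<ge> N"
    hence npos: "real n > 0" using N1 z unfolding N_def by linarith
    have zn: "z + real n \<le> 2 * real n" "z + real n > 0" using n N1 z unfolding N_def by linarith+
    have "rGamma z / 2 * (fact n * real n powr z) < pochhammer z (Suc n)"
      using N0[of n] n npos unfolding N_def by (simp add: rGs_eq field_simps)
    also have "pochhammer z (Suc n) = pochhammer z n * (z + real n)" by (rule pochhammer_Suc)
    also have "\<dots> \<le> pochhammer z n * (2 * real n)"
      using zn z by (intro mult_left_mono) (auto intro!: pochhammer_nonneg)
    finally have "rGamma z / 2 * (fact n * (real n * real n powr (z - 1))) < pochhammer z n * (2 * real n)"
      using npos by (simp add: powr_diff)
    hence "(rGamma z / 4 * fact n * real n powr (z - 1)) * real n < pochhammer z n * real n"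
      by (simp add: field_simps)
    thus "pochhammer z n \<ge> (rGamma z / 4) * fact n * real n powr (z - 1)"
      using npos by (simp add: mult_less_cancel_right)
  qed
  thus ?thesis using r by (intro exI[of _ "rGamma z / 4"]) auto
qed

lemma L1_CS_bound:
  fixes h u v :: "real \<Rightarrow> real"
  assumes ih: "integrable lborel h"
    and um[measurable]: "u \<in> borel_measurable borel" and vm[measurable]: "v \<in> borel_measurable borel"
    and huv: "\<And>t. \<bar>h t\<bar> = \<bar>u t\<bar> * \<bar>v t\<bar>"
    and U: "(\<integral>\<^sup>+t. ennreal ((u t)^2) \<partial>lborel) \<le> ennreal A"
    and V: "(\<integral>\<^sup>+t. ennreal ((v t)^2) \<partial>lborel) \<le> ennreal B"
    and A: "A \<ge> 0" and B: "B \<ge> 0"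
  shows "(\<integral>t. \<bar>h t\<bar> \<partial>lborel) \<le> sqrt (A * B)"
proof -
  have cs: "(\<integral>\<^sup>+t. ennreal \<bar>u t\<bar> * ennreal \<bar>v t\<bar> \<partial>lborel)^2
      \<le> (\<integral>\<^sup>+t. ennreal \<bar>u t\<bar> ^ 2 \<partial>lborel) * (\<integral>\<^sup>+t. ennreal \<bar>v t\<bar> ^ 2 \<partial>lborel)"
    by (rule Cauchy_Schwarz_nn_integral) auto
  have e1: "(\<integral>\<^sup>+t. ennreal \<bar>u t\<bar> * ennreal \<bar>v t\<bar> \<partial>lborel) = ennreal (\<integral>t. \<bar>h t\<bar> \<partial>lborel)"
  proof -
    have "(\<integral>\<^sup>+t. ennreal \<bar>u t\<bar> * ennreal \<bar>v t\<bar> \<partial>lborel) = (\<integral>\<^sup>+t. ennreal \<bar>h t\<bar> \<partial>lborel)"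
      by (intro nn_integral_cong) (simp add: huv ennreal_mult)
    also have "\<dots> = ennreal (\<integral>t. \<bar>h t\<bar> \<partial>lborel)"
      by (intro nn_integral_eq_integral) (auto intro: ih)
    finally show ?thesis .
  qed
  have e2: "(\<integral>\<^sup>+t. ennreal \<bar>u t\<bar> ^ 2 \<partial>lborel) = (\<integral>\<^sup>+t. ennreal ((u t)^2) \<partial>lborel)"
    by (intro nn_integral_cong) (simp add: ennreal_power)
  have e3: "(\<integral>\<^sup>+t. ennreal \<bar>v t\<bar> ^ 2 \<partial>lborel) = (\<integral>\<^sup>+t. ennreal ((v t)^2) \<partial>lborel)"
    by (intro nn_integral_cong) (simp add: ennreal_power)
  have "ennreal ((\<integral>t. \<bar>h t\<bar> \<partial>lborel)^2) = ennreal (\<integral>t. \<bar>h t\<bar> \<partial>lborel) ^ 2"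
    by (simp add: ennreal_power)
  also have "\<dots> \<le> ennreal A * ennreal B"
    using cs unfolding e1 e2 e3 using U V by (meson mult_mono' zero_le order_trans)
  also have "\<dots> = ennreal (A * B)" using A B by (simp add: ennreal_mult)
  finally have "(\<integral>t. \<bar>h t\<bar> \<partial>lborel)^2 \<le> A * B"
    using A B by (simp add: ennreal_le_iff)
  thus ?thesis by (rule real_le_rsqrt)
qed

lemma ell_sum:
  assumes a: "\<alpha> > -1"
  shows "indicator {0<..} t * (c * ell n \<alpha> t) * exp (-(s * t)) =
    indicator {0<..} t * (\<Sum>k\<le>n. (c * (-1)^k * real (n choose k) / Gamma (\<alpha> + 1 + real k)) *
        (t powr (\<alpha> + real k) * exp (-((s + 1) * t))))"
proof (cases "t > 0")
  case True
  have "c * ell n \<alpha> t * exp (-(s * t)) = c * (t powr \<alpha> * exp (-t) * P n \<alpha> t) * exp (-(s * t))"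
    by (simp add: ell_alt[OF a])
  also have "\<dots> = (\<Sum>k\<le>n. (c * (-1)^k * real (n choose k) / Gamma (\<alpha> + 1 + real k)) *
        (t powr \<alpha> * t ^ k * (exp (-t) * exp (-(s * t)))))"
    by (simp add: P_def sum_distrib_left mult_ac)
  also have "\<dots> = (\<Sum>k\<le>n. (c * (-1)^k * real (n choose k) / Gamma (\<alpha> + 1 + real k)) *
        (t powr (\<alpha> + real k) * exp (-((s + 1) * t))))"
    using True by (simp add: powr_add powr_realpow exp_add[symmetric] algebra_simps)
  finally show ?thesis using True by simp
qed simp

lemma ell_integrable:
  assumes a: "\<alpha> > -1"
  shows "integrable lborel (\<lambda>t. indicator {0<..} t * (c * ell n \<alpha> t))"
proof -
  have "integrable lborel (\<lambda>t. indicator {0<..} t * (\<Sum>k\<le>n. (c * (-1)^k * real (n choose k) / Gamma (\<alpha> + 1 + real k)) *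
        (t powr (\<alpha> + real k) * exp (-((0 + 1) * t)))))"
    by (rule gint_sum(1)) (use a in auto)
  moreover have "indicator {0<..} t * (c * ell n \<alpha> t) = indicator {0<..} t * (\<Sum>k\<le>n. (c * (-1)^k * real (n choose k) / Gamma (\<alpha> + 1 + real k)) *
        (t powr (\<alpha> + real k) * exp (-((0 + 1) * t))))" for t
    using ell_sum[OF a, of t c n 0] by simp
  ultimately show ?thesis by (simp only:)
qed

lemma ell_laplace:
  assumes a: "\<alpha> > -1" and s: "s > -1"
  shows "(\<integral>t. indicator {0<..} t * (c * ell n \<alpha> t) * exp (-(s * t)) \<partial>lborel)
       = c * (s + 1) powr (-(\<alpha> + 1)) * (s / (s + 1)) ^ n"
proof -
  have "(\<integral>t. indicator {0<..} t * (c * ell n \<alpha> t) * exp (-(s * t)) \<partial>lborel)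
      = (\<integral>t. indicator {0<..} t * (\<Sum>k\<le>n. (c * (-1)^k * real (n choose k) / Gamma (\<alpha> + 1 + real k)) *
        (t powr (\<alpha> + real k) * exp (-((s + 1) * t)))) \<partial>lborel)"
    by (simp only: ell_sum[OF a])
  also have "\<dots> = (\<Sum>k\<le>n. (c * (-1)^k * real (n choose k) / Gamma (\<alpha> + 1 + real k)) *
        (Gamma (\<alpha> + real k + 1) / (s + 1) powr (\<alpha> + real k + 1)))"
    by (rule gint_sum(2)) (use a s in auto)
  also have "\<dots> = c * (s + 1) powr (-(\<alpha> + 1)) * (\<Sum>k\<le>n. real (n choose k) * (-1 / (s + 1)) ^ k * 1 ^ (n - k))"
  proof -
    have "(c * (-1)^k * real (n choose k) / Gamma (\<alpha> + 1 + real k)) *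
        (Gamma (\<alpha> + real k + 1) / (s + 1) powr (\<alpha> + real k + 1))
        = c * (s + 1) powr (-(\<alpha> + 1)) * (real (n choose k) * (-1 / (s + 1)) ^ k * 1 ^ (n - k))" for k
    proof -
      have G: "Gamma (\<alpha> + 1 + real k) > 0" using a by (intro Gamma_real_pos) simp
      define W where "W = (s + 1) powr (\<alpha> + 1)"
      have W: "W > 0" unfolding W_def using s by simp
      have p: "(s + 1) powr (\<alpha> + real k + 1) = W * (s + 1) ^ k"
        unfolding W_def using s by (simp add: powr_add powr_realpow algebra_simps)
      have q: "(s + 1) powr (-(\<alpha> + 1)) = 1 / W"
        unfolding W_def using powr_minus[of "s+1" "\<alpha> + 1"] by (simp add: divide_inverse)
      have g: "Gamma (\<alpha> + real k + 1) = Gamma (\<alpha> + 1 + real k)" by (simp add: add_ac)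
      have r: "(-1 / (s + 1)) ^ k = (-1) ^ k / (s + 1) ^ k" by (rule power_divide)
      have sp: "(s + 1) ^ k > 0" using s by simp
      show ?thesis unfolding p q g r using G sp W
        by (simp add: field_simps)
    qed
    thus ?thesis by (simp add: sum_distrib_left)
  qed
  also have "(\<Sum>k\<le>n. real (n choose k) * (-1 / (s + 1)) ^ k * 1 ^ (n - k)) = (-1 / (s + 1) + 1) ^ n"
    by (rule binomial_ring[symmetric])
  also have "-1 / (s + 1) + 1 = s / (s + 1)" using s by (simp add: field_simps)
  finally show ?thesis .
qed

lemma ell_L1:
  assumes a: "\<alpha> > -1"
  shows "(\<integral>t. \<bar>indicator {0<..} t * ell n \<alpha> t\<bar> \<partial>lborel) \<le> sqrt (Gamma (\<alpha> + 1) * (fact n / Gamma (real n + \<alpha> + 1)))"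
proof (rule L1_CS_bound)
  show "integrable lborel (\<lambda>t. indicator {0<..} t * ell n \<alpha> t)"
    using ell_integrable[OF a, of 1 n] by simp
  let ?u = "\<lambda>t. indicator {0<..} t * sqrt (t powr \<alpha> * exp (-t))"
  let ?v = "\<lambda>t. indicator {0<..} t * sqrt (t powr \<alpha> * exp (-t)) * P n \<alpha> t"
  show "?u \<in> borel_measurable borel" by measurable
  show "?v \<in> borel_measurable borel" unfolding P_def by measurable
  show "\<bar>indicator {0<..} t * ell n \<alpha> t\<bar> = \<bar>?u t\<bar> * \<bar>?v t\<bar>" for t
  proof (cases "t > 0")
    case True
    have "sqrt (t powr \<alpha> * exp (-t)) * sqrt (t powr \<alpha> * exp (-t)) = t powr \<alpha> * exp (-t)"
      using True by simp
    thus ?thesis using True by (simp add: ell_alt[OF a] abs_mult)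
  qed simp
  have "(\<integral>\<^sup>+t. ennreal ((?u t)^2) \<partial>lborel) = (\<integral>\<^sup>+t. ennreal (indicator {0<..} t * (t powr (\<alpha>) * exp (-(1 * t)))) \<partial>lborel)"
    by (intro nn_integral_cong) (auto simp: indicator_def power2_eq_square)
  also have "\<dots> = ennreal (Gamma (\<alpha> + 1))"
    using gint_nn[OF a, of 1] by simp
  finally show "(\<integral>\<^sup>+t. ennreal ((?u t)^2) \<partial>lborel) \<le> ennreal (Gamma (\<alpha> + 1))" by simp
  have "(\<integral>\<^sup>+t. ennreal ((?v t)^2) \<partial>lborel) = (\<integral>\<^sup>+t. ennreal (indicator {0<..} t * (t powr \<alpha> * exp (-t) * P n \<alpha> t ^ 2)) \<partial>lborel)"
    by (intro nn_integral_cong) (auto simp: indicator_def power2_eq_square)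
  also have "\<dots> = ennreal (\<integral>t. indicator {0<..} t * (t powr \<alpha> * exp (-t) * P n \<alpha> t ^ 2) \<partial>lborel)"
    using norm_P(1)[OF a, of n] by (intro nn_integral_eq_integral) auto
  also have "\<dots> = ennreal (fact n / Gamma (real n + \<alpha> + 1))"
    using norm_P(2)[OF a, of n] by simp
  finally show "(\<integral>\<^sup>+t. ennreal ((?v t)^2) \<partial>lborel) \<le> ennreal (fact n / Gamma (real n + \<alpha> + 1))" by simp
  show "Gamma (\<alpha> + 1) \<ge> 0" using a by (intro Gamma_real_nonneg) simp
  have "Gamma (real n + \<alpha> + 1) > 0" using a by (intro Gamma_real_pos) simp
  thus "fact n / Gamma (real n + \<alpha> + 1) \<ge> 0" by simp
qed

lemma part1:
  fixes \<alpha> \<beta> :: real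
  assumes a: "\<alpha> > -1" and ab: "2 * \<beta> > \<alpha>"
  shows "L1_sums (\<lambda>n t. ((\<alpha> - \<beta> + real n - 1) gchoose n) * ell n \<alpha> t) (I_fun (\<beta> + 1))"
proof -
  define \<gamma> where "\<gamma> = \<alpha> - \<beta>"
  define c where "c n = ((\<alpha> - \<beta> + real n - 1) gchoose n)" for n
  have b: "\<beta> > -1" using a ab by linarith
  have Gb: "Gamma (\<beta> + 1) > 0" using b by (intro Gamma_real_pos) simp
  have Ga: "Gamma (\<alpha> + 1) > 0" using a by (intro Gamma_real_pos) simp
  have Ieq: "indicator {0<..} t * I_fun (\<beta> + 1) t * exp (-(s * t))
      = (1 / Gamma (\<beta> + 1)) * (indicator {0<..} t * (t powr \<beta> * exp (-((s + 1) * t))))" for t s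
    by (simp add: I_fun_def exp_add[symmetric] algebra_simps)
  show ?thesis
  proof (rule L1_sums_abstract)
    have "integrable lborel (\<lambda>t. indicator {0<..} t * (c n * ell n \<alpha> t))" for n
      by (rule ell_integrable[OF a])
    then show "\<And>n. integrable lborel (\<lambda>t. indicator {0<..} t * (((\<alpha> - \<beta> + real n - 1) gchoose n) * ell n \<alpha> t))"
      by (simp add: c_def)
    have "integrable lborel (\<lambda>t. (1 / Gamma (\<beta> + 1)) * (indicator {0<..} t * (t powr \<beta> * exp (-((0 + 1) * t)))))"
      using gint(1)[OF b, of "0+1"] by simp
    thus "integrable lborel (\<lambda>t. indicator {0<..} t * I_fun (\<beta> + 1) t)"
      using Ieq[of _ 0] by simp
  next
    fix k :: nat
    define s where "s = real k + 1"
    have s: "s > 0" unfolding s_def by simp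
    define x where "x = s / (s + 1)"
    have x: "\<bar>x\<bar> < 1" "x \<ge> 0" unfolding x_def using s by auto
    have ser: "(\<lambda>n. c n * x ^ n) sums (1 - x) powr (-\<gamma>)"
    proof -
      have "(\<lambda>n. ((-\<gamma>) gchoose n) * (-x)^n) sums (1 + (-x)) powr (-\<gamma>)"
        by (rule gen_binomial_real) (use x in simp)
      moreover have "((-\<gamma>) gchoose n) * (-x)^n = c n * x ^ n" for n
        unfolding gbinomial_minus c_def \<gamma>_def
        by (simp add: power_minus[of x] algebra_simps)
      ultimately show ?thesis by simp
    qed
    have "(\<lambda>n. (s + 1) powr (-(\<alpha> + 1)) * (c n * x ^ n)) sums ((s + 1) powr (-(\<alpha> + 1)) * (1 - x) powr (-\<gamma>))"
      by (rule sums_mult[OF ser])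
    moreover have "(s + 1) powr (-(\<alpha> + 1)) * (c n * x ^ n) =
        (\<integral>t. indicator {0<..} t * (c n * ell n \<alpha> t) * exp (-(s * t)) \<partial>lborel)" for n
      using ell_laplace[OF a, of s "c n" n] s by (simp add: x_def)
    moreover have "(s + 1) powr (-(\<alpha> + 1)) * (1 - x) powr (-\<gamma>)
        = (\<integral>t. indicator {0<..} t * I_fun (\<beta> + 1) t * exp (-(s * t)) \<partial>lborel)"
    proof -
      have "1 - x = 1 / (s + 1)" unfolding x_def using s by (simp add: field_simps)
      hence "(1 - x) powr (-\<gamma>) = (s + 1) powr \<gamma>"
        using s by (simp add: powr_divide powr_minus_divide)
      hence "(s + 1) powr (-(\<alpha> + 1)) * (1 - x) powr (-\<gamma>) = (s + 1) powr (-(\<beta> + 1))"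
        using s by (simp add: powr_add[symmetric] \<gamma>_def algebra_simps)
      also have "\<dots> = 1 / Gamma (\<beta> + 1) * (Gamma (\<beta> + 1) / (s + 1) powr (\<beta> + 1))"
        using Gb s powr_minus[of "s+1" "\<beta> + 1"] by (simp add: divide_inverse)
      also have "\<dots> = (\<integral>t. (1 / Gamma (\<beta> + 1)) * (indicator {0<..} t * (t powr \<beta> * exp (-((s + 1) * t)))) \<partial>lborel)"
        using gint(2)[OF b, of "s + 1"] s by simp
      also have "\<dots> = (\<integral>t. indicator {0<..} t * I_fun (\<beta> + 1) t * exp (-(s * t)) \<partial>lborel)"
        by (simp only: Ieq)
      finally show ?thesis .
    qed
    ultimately show "(\<lambda>n. \<integral>t. indicator {0<..} t * (((\<alpha> - \<beta> + real n - 1) gchoose n) * ell n \<alpha> t) * exp (-((real k + 1) * t)) \<partial>lborel)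
        sums (\<integral>t. indicator {0<..} t * I_fun (\<beta> + 1) t * exp (-((real k + 1) * t)) \<partial>lborel)"
      unfolding s_def c_def by simp
  next
    obtain B N1 where B: "\<And>n. n \<ge> N1 \<Longrightarrow> \<bar>pochhammer \<gamma> n\<bar> \<le> B * fact n * real n powr (\<gamma> - 1)"
      using poch_upper[of \<gamma>] by blast
    obtain bb N2 where bb: "bb > 0" "\<And>n. n \<ge> N2 \<Longrightarrow> pochhammer (\<alpha> + 1) n \<ge> bb * fact n * real n powr (\<alpha> + 1 - 1)"
      using poch_lower[of "\<alpha> + 1"] a by auto
    define C where "C = B / sqrt bb"
    define p where "p = \<gamma> - 1 - \<alpha> / 2"
    have p: "p < -1" unfolding p_def \<gamma>_def using ab by simp
    have sg: "summable (\<lambda>n. C * real n powr p)"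
      by (intro summable_mult) (use p summable_real_powr_iff in auto)
    show "summable (\<lambda>n. \<integral>t. \<bar>indicator {0<..} t * (((\<alpha> - \<beta> + real n - 1) gchoose n) * ell n \<alpha> t)\<bar> \<partial>lborel)"
    proof (rule summable_comparison_test'[OF sg])
      fix n assume n: "n \<ge> max (max N1 N2) 1"
      hence n1: "n \<ge> N1" and n2: "n \<ge> N2" and npos: "real n > 0" by auto
      have cn: "c n = pochhammer \<gamma> n / fact n"
        unfolding c_def \<gamma>_def by (subst gbinomial_pochhammer') (simp add: algebra_simps)
      have cb: "\<bar>c n\<bar> \<le> B * real n powr (\<gamma> - 1)"
        using B[OF n1] unfolding cn by (simp add: abs_divide field_simps)
      have nzp: "\<alpha> + 1 \<notin> \<int>\<^sub>\<le>\<^sub>0" using a by (auto elim!: nonpos_Ints_cases)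
      have GG: "Gamma (real n + \<alpha> + 1) = Gamma (\<alpha> + 1) * pochhammer (\<alpha> + 1) n"
        using pochhammer_Gamma[OF nzp, of n] Ga by (simp add: field_simps add_ac)
      have pl: "pochhammer (\<alpha> + 1) n \<ge> bb * fact n * real n powr \<alpha>" using bb(2)[OF n2] by simp
      have plpos: "bb * fact n * real n powr \<alpha> > 0" using bb npos by simp
      have K: "Gamma (\<alpha> + 1) * (fact n / Gamma (real n + \<alpha> + 1)) \<le> real n powr (-\<alpha>) / bb"
      proof -
        have "Gamma (\<alpha> + 1) * (fact n / Gamma (real n + \<alpha> + 1)) = fact n / pochhammer (\<alpha> + 1) n"
          unfolding GG using Ga by simp
        also have "\<dots> \<le> fact n / (bb * fact n * real n powr \<alpha>)"
          using pl plpos by (intro divide_left_mono) auto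
        also have "\<dots> = real n powr (-\<alpha>) / bb" using npos bb by (simp add: powr_minus field_simps)
        finally show ?thesis .
      qed
      have "(\<integral>t. \<bar>indicator {0<..} t * (c n * ell n \<alpha> t)\<bar> \<partial>lborel) = \<bar>c n\<bar> * (\<integral>t. \<bar>indicator {0<..} t * ell n \<alpha> t\<bar> \<partial>lborel)"
        by (simp add: abs_mult mult_ac)
      also have "\<dots> \<le> \<bar>c n\<bar> * sqrt (real n powr (-\<alpha>) / bb)"
      proof (intro mult_left_mono order_trans[OF ell_L1[OF a]])
        show "sqrt (Gamma (\<alpha> + 1) * (fact n / Gamma (real n + \<alpha> + 1))) \<le> sqrt (real n powr - \<alpha> / bb)"
          using K by (rule real_sqrt_le_mono)
      qed simp
      also have "\<dots> \<le> B * real n powr (\<gamma> - 1) * sqrt (real n powr (-\<alpha>) / bb)"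
        by (intro mult_right_mono cb) (use bb in simp)
      also have "\<dots> = C * real n powr p"
      proof -
        have "sqrt (real n powr (-\<alpha>) / bb) = real n powr (-\<alpha> / 2) / sqrt bb"
          using npos by (simp add: real_sqrt_divide powr_half_sqrt_powr[symmetric])
        thus ?thesis unfolding C_def p_def using npos
          by (simp add: powr_add[symmetric] field_simps)
      qed
      finally show "norm (\<integral>t. \<bar>indicator {0<..} t * (((\<alpha> - \<beta> + real n - 1) gchoose n) * ell n \<alpha> t)\<bar> \<partial>lborel) \<le> C * real n powr p"
        by (simp add: c_def)
    qed
  qed
qed

lemma laguerre_shift:
  "laguerre n \<alpha> t = laguerre n (\<alpha> + 1) t - (if n = 0 then 0 else laguerre (n - 1) (\<alpha> + 1) t)"
proof (cases n)
  case 0 thus ?thesis by (simp add: laguerre_def)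
next
  case (Suc m)
  have A: "laguerre (Suc m) (\<alpha> + 1) t = (\<Sum>k\<le>m. (-1)^k * ((real (Suc m) + (\<alpha> + 1)) gchoose (Suc m - k)) * t ^ k / fact k)
        + (-1)^(Suc m) * t ^ Suc m / fact (Suc m)"
    by (simp add: laguerre_def)
  have B: "laguerre (Suc m) \<alpha> t = (\<Sum>k\<le>m. (-1)^k * ((real (Suc m) + \<alpha>) gchoose (Suc m - k)) * t ^ k / fact k)
        + (-1)^(Suc m) * t ^ Suc m / fact (Suc m)"
    by (simp add: laguerre_def)
  have C: "laguerre m (\<alpha> + 1) t = (\<Sum>k\<le>m. (-1)^k * ((real (Suc m) + \<alpha>) gchoose (m - k)) * t ^ k / fact k)"
    unfolding laguerre_def by (intro sum.cong refl) (simp add: add_ac)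
  have D: "(\<Sum>k\<le>m. (-1)^k * ((real (Suc m) + (\<alpha> + 1)) gchoose (Suc m - k)) * t ^ k / fact k)
      = (\<Sum>k\<le>m. (-1)^k * ((real (Suc m) + \<alpha>) gchoose (m - k)) * t ^ k / fact k)
      + (\<Sum>k\<le>m. (-1)^k * ((real (Suc m) + \<alpha>) gchoose (Suc m - k)) * t ^ k / fact k)"
  proof -
    have "(\<Sum>k\<le>m. (-1)^k * ((real (Suc m) + (\<alpha> + 1)) gchoose (Suc m - k)) * t ^ k / fact k)
      = (\<Sum>k\<le>m. (-1)^k * ((real (Suc m) + \<alpha>) gchoose (m - k)) * t ^ k / fact k
              + (-1)^k * ((real (Suc m) + \<alpha>) gchoose (Suc m - k)) * t ^ k / fact k)"
    proof (intro sum.cong refl)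
      fix k assume "k \<in> {..m}"
      hence k: "k \<le> m" by simp
      have "(real (Suc m) + (\<alpha> + 1)) gchoose (Suc m - k) = ((real (Suc m) + \<alpha>) + 1) gchoose (Suc (m - k))"
        using k by (simp add: Suc_diff_le add_ac)
      also have "\<dots> = ((real (Suc m) + \<alpha>) gchoose (m - k)) + ((real (Suc m) + \<alpha>) gchoose (Suc (m - k)))"
        by (rule gbinomial_Suc_Suc)
      also have "Suc (m - k) = Suc m - k" using k by simp
      finally show "(-1)^k * ((real (Suc m) + (\<alpha> + 1)) gchoose (Suc m - k)) * t ^ k / fact k
          = (-1)^k * ((real (Suc m) + \<alpha>) gchoose (m - k)) * t ^ k / fact k
              + (-1)^k * ((real (Suc m) + \<alpha>) gchoose (Suc m - k)) * t ^ k / fact k"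
        by (simp add: algebra_simps add_divide_distrib)
    qed
    also have "\<dots> = (\<Sum>k\<le>m. (-1)^k * ((real (Suc m) + \<alpha>) gchoose (m - k)) * t ^ k / fact k)
      + (\<Sum>k\<le>m. (-1)^k * ((real (Suc m) + \<alpha>) gchoose (Suc m - k)) * t ^ k / fact k)"
      by (rule sum.distrib)
    finally show ?thesis .
  qed
  show ?thesis using A B C D Suc by simp
qed

lemma norm_L:
  assumes a: "\<alpha> > -1"
  shows "integrable lborel (\<lambda>t. indicator {0<..} t * (t powr \<alpha> * exp (-t) * laguerre n \<alpha> t ^ 2))"
    and "(\<integral>t. indicator {0<..} t * (t powr \<alpha> * exp (-t) * laguerre n \<alpha> t ^ 2) \<partial>lborel) = Gamma (real n + \<alpha> + 1) / fact n"
proof -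
  define K where "K = Gamma (real n + \<alpha> + 1) / fact n"
  have G: "Gamma (real n + \<alpha> + 1) > 0" using a by (intro Gamma_real_pos) simp
  have eq: "(\<lambda>t. indicator {0<..} t * (t powr \<alpha> * exp (-t) * laguerre n \<alpha> t ^ 2))
      = (\<lambda>t. K^2 * (indicator {0<..} t * (t powr \<alpha> * exp (-t) * P n \<alpha> t ^ 2)))"
  proof (rule ext)
    fix t
    have lk: "laguerre n \<alpha> t = K * P n \<alpha> t" unfolding K_def by (rule laguerre_alt[OF a])
    show "indicator {0<..} t * (t powr \<alpha> * exp (-t) * laguerre n \<alpha> t ^ 2)
      = K^2 * (indicator {0<..} t * (t powr \<alpha> * exp (-t) * P n \<alpha> t ^ 2))"
      unfolding lk by (simp add: power_mult_distrib mult_ac)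
  qed
  show "integrable lborel (\<lambda>t. indicator {0<..} t * (t powr \<alpha> * exp (-t) * laguerre n \<alpha> t ^ 2))"
    unfolding eq using norm_P(1)[OF a] by simp
  have "(\<integral>t. indicator {0<..} t * (t powr \<alpha> * exp (-t) * laguerre n \<alpha> t ^ 2) \<partial>lborel) = K^2 * (fact n / Gamma (real n + \<alpha> + 1))"
    unfolding eq using norm_P(2)[OF a] by simp
  also have "\<dots> = K" unfolding K_def using G by (simp add: power2_eq_square)
  finally show "(\<integral>t. indicator {0<..} t * (t powr \<alpha> * exp (-t) * laguerre n \<alpha> t ^ 2) \<partial>lborel) = Gamma (real n + \<alpha> + 1) / fact n"
    unfolding K_def .
qed

lemma inv_sq_int:
  "(\<integral>\<^sup>+t. ennreal ((indicator {0<..} t * (1 / (1 + t)))^2) \<partial>lborel) \<le> ennreal 1"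
proof -
  have "(\<integral>\<^sup>+t. ennreal ((indicator {0<..} t * (1 / (1 + t)))^2) \<partial>lborel)
      \<le> (\<integral>\<^sup>+t. ennreal (1 / (1 + t)^2) * indicator {0..} t \<partial>lborel)"
    by (intro nn_integral_mono) (auto simp: indicator_def power_divide)
  also have "\<dots> = ennreal (0 - (-1 / (1 + 0)))"
  proof (rule nn_integral_FTC_atLeast)
    show "(\<lambda>x::real. 1 / (1 + x)^2) \<in> borel_measurable borel"
      using borel_measurable_divide[of "\<lambda>x::real. 1" borel "\<lambda>x. (1+x)^2"] by auto
    show "DERIV (\<lambda>x. -1 / (1 + x)) x :> 1 / (1 + x)^2" if "0 \<le> x" for x :: real
      using that by (auto intro!: derivative_eq_intros simp: power2_eq_square)
    show "0 \<le> 1 / (1 + x)^2" for x :: real by simp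
    show "((\<lambda>x::real. -1 / (1 + x)) \<longlongrightarrow> 0) at_top"
      by (rule tendsto_divide_0[OF tendsto_const], rule filterlim_at_top_imp_at_infinity,
          rule filterlim_tendsto_add_at_top[OF tendsto_const filterlim_ident])
  qed
  finally show ?thesis by simp
qed

lemma lin1: "(x::real) \<le> 6*(a+b) \<Longrightarrow> 0 \<le> c \<Longrightarrow> x \<le> 6*(a+b+c)" by (simp only: distrib_left)
lemma lin2: "(A::real) \<le> W \<Longrightarrow> B \<le> W \<Longrightarrow> C \<le> W \<Longrightarrow> 2 \<le> 2*W \<Longrightarrow> 2 + 12*(A+B+C) \<le> 38*W"
  by (simp only: distrib_left)

lemma sq6: "(x - 2 * y + z)^2 \<le> 6 * (x^2 + y^2 + (z::real)^2)"
proof -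
  have "0 \<le> (2*x+y)^2 + (2*z+y)^2 + (x-z)^2" by simp
  thus ?thesis by (simp add: power2_eq_square algebra_simps)
qed

lemma lag0_sq:
  "(laguerre n 0 t)^2 \<le> 6 * ((laguerre n 2 t)^2 + (laguerre (n-1) 2 t)^2 + (laguerre (n-2) 2 t)^2)"
proof -
  have s0: "laguerre m 0 t = laguerre m 1 t - (if m = 0 then 0 else laguerre (m - 1) 1 t)" for m
    using laguerre_shift[of m 0 t] by simp
  have s1: "laguerre m 1 t = laguerre m 2 t - (if m = 0 then 0 else laguerre (m - 1) 2 t)" for m
    using laguerre_shift[of m 1 t] by simp
  consider "n = 0" | "n = 1" | "n \<ge> 2" by linarith
  thus ?thesis
  proof cases
    case 1
    hence "laguerre n 0 t = laguerre n 2 t" using s0[of n] s1[of n] by simp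
    thus ?thesis by (simp add: power2_eq_square)
  next
    case 2
    hence "laguerre n 0 t = laguerre n 2 t - 2 * laguerre (n-1) 2 t + 0"
      using s0[of n] s1[of n] s1[of "n-1"] by simp
    hence "(laguerre n 0 t)^2 \<le> 6 * ((laguerre n 2 t)^2 + (laguerre (n-1) 2 t)^2)"
      using sq6[of "laguerre n 2 t" "laguerre (n-1) 2 t" 0] by simp
    moreover have "0 \<le> (laguerre (n-2) 2 t)^2" by simp
    ultimately show ?thesis by (rule lin1)
  next
    case 3
    hence "laguerre n 0 t = laguerre n 2 t - 2 * laguerre (n-1) 2 t + laguerre (n-2) 2 t"
      using s0[of n] s1[of n] s1[of "n-1"] by (simp add: diff_diff_eq numeral_2_eq_2)
    thus ?thesis using sq6 by simp
  qed
qed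

lemma Gamma_ratio2: "Gamma (real j + 2 + 1) / fact j = (real j + 1) * (real j + 2)"
proof -
  have "Gamma (real j + 2 + 1) = fact (j + 2)"
    using Gamma_fact[of "j+2"] by (simp add: add_ac)
  also have "fact (j + 2) = (real j + 2) * (real j + 1) * (fact j :: real)"
    by (simp add: fact_Suc algebra_simps numeral_2_eq_2)
  finally show ?thesis by simp
qed

lemma lagfun_ell: "t > 0 \<Longrightarrow> laguerre_fun n t = ell n 0 t * exp (t / 2)"
proof -
  assume t: "t > 0"
  have "Gamma (real n + 0 + 1) = fact n" using Gamma_fact[of n, where 'a=real] by (simp add: add_ac)
  hence "ell n 0 t = exp (-t) * laguerre n 0 t" using t by (simp add: ell_def)
  moreover have "exp (-t) * exp (t / 2) = exp (-t / 2)" by (simp add: exp_add[symmetric])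
  ultimately show ?thesis by (simp add: laguerre_fun_def mult_ac)
qed

lemma lagfun_pw:
  "indicator {0<..} t * (c * laguerre_fun n t) * exp (-(s * t))
   = indicator {0<..} t * (c * ell n 0 t) * exp (-((s - 1/2) * t))"
proof (cases "t > 0")
  case True
  have "exp (t / 2) * exp (-(s * t)) = exp (-((s - 1/2) * t))" by (simp add: exp_add[symmetric] algebra_simps)
  thus ?thesis using True by (simp add: lagfun_ell mult_ac)
qed simp

lemma lagfun_integrable:
  assumes s: "s > -1/2"
  shows "integrable lborel (\<lambda>t. indicator {0<..} t * (c * laguerre_fun n t) * exp (-(s * t)))"
proof -
  have "integrable lborel (\<lambda>t. indicator {0<..} t * (\<Sum>k\<le>n. (c * (-1)^k * real (n choose k) / Gamma (0 + 1 + real k)) *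
        (t powr (0 + real k) * exp (-(((s - 1/2) + 1) * t)))))"
    by (rule gint_sum(1)) (use s in auto)
  moreover have "indicator {0<..} t * (c * laguerre_fun n t) * exp (-(s * t))
      = indicator {0<..} t * (\<Sum>k\<le>n. (c * (-1)^k * real (n choose k) / Gamma (0 + 1 + real k)) *
        (t powr (0 + real k) * exp (-(((s - 1/2) + 1) * t))))" for t
    by (subst lagfun_pw, rule ell_sum) simp
  ultimately show ?thesis by (simp only:)
qed

lemma lagfun_laplace:
  assumes s: "s > -1/2"
  shows "(\<integral>t. indicator {0<..} t * (c * laguerre_fun n t) * exp (-(s * t)) \<partial>lborel)
       = c / (s + 1/2) * ((s - 1/2) / (s + 1/2)) ^ n"
proof -
  have "(\<integral>t. indicator {0<..} t * (c * laguerre_fun n t) * exp (-(s * t)) \<partial>lborel)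
      = (\<integral>t. indicator {0<..} t * (c * ell n 0 t) * exp (-((s - 1/2) * t)) \<partial>lborel)"
    by (simp only: lagfun_pw)
  also have "\<dots> = c * ((s - 1/2) + 1) powr (-(0 + 1)) * ((s - 1/2) / ((s - 1/2) + 1)) ^ n"
    by (rule ell_laplace) (use s in auto)
  also have "\<dots> = c / (s + 1/2) * ((s - 1/2) / (s + 1/2)) ^ n"
  proof -
    have h1: "s - 1/2 + 1 = s + 1/2" by simp
    have h2: "(s + 1/2) powr (-(0+1)) = 1 / (s + 1/2)"
      using s by (simp add: powr_minus_divide)
    show ?thesis unfolding h1 by (subst h2) auto
  qed
  finally show ?thesis .
qed

lemma u_sq_bound:
  "(indicator {0<..} t * (exp (-t/2) * (1 + t) * laguerre n 0 t))^2 \<le>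
    2 * (indicator {0<..} t * (t powr 0 * exp (-t) * laguerre n 0 t ^ 2)) +
    12 * (indicator {0<..} t * (t powr 2 * exp (-t) * laguerre n 2 t ^ 2) +
          indicator {0<..} t * (t powr 2 * exp (-t) * laguerre (n-1) 2 t ^ 2) +
          indicator {0<..} t * (t powr 2 * exp (-t) * laguerre (n-2) 2 t ^ 2))"
proof (cases "t > 0")
  case True
  define L where "L = laguerre n 0 t"
  define S where "S = (laguerre n 2 t)^2 + (laguerre (n-1) 2 t)^2 + (laguerre (n-2) 2 t)^2"
  define E where "E = exp (-t)"
  have E0: "E > 0" unfolding E_def by simp
  have e: "exp (-(t/2))^2 = E"
    unfolding E_def by (simp add: power2_eq_square exp_add[symmetric])
  have "(indicator {0<..} t * (exp (-t/2) * (1 + t) * laguerre n 0 t))^2 = E * ((1 + t)^2 * L^2)"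
    using True unfolding L_def by (simp add: power_mult_distrib e)
  also have "\<dots> \<le> E * ((2 + 2 * t^2) * L^2)"
  proof -
    have "(1 + t)^2 \<le> 2 + 2 * t^2"
      using sum_squares_ge_zero[of "1 - t" 0] by (simp add: power2_eq_square algebra_simps)
    thus ?thesis using E0 by (intro mult_left_mono mult_right_mono) auto
  qed
  also have "\<dots> = 2 * (E * L^2) + 2 * (t^2 * E * L^2)"
    by (simp add: algebra_simps)
  also have "\<dots> \<le> 2 * (E * L^2) + 2 * (t^2 * E * (6 * S))"
    unfolding L_def S_def using E0 by (intro add_left_mono mult_left_mono lag0_sq) auto
  also have "\<dots> = 2 * (E * L^2) + 12 * (t^2 * E * laguerre n 2 t ^ 2 + t^2 * E * laguerre (n-1) 2 t ^ 2 + t^2 * E * laguerre (n-2) 2 t ^ 2)"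
    unfolding S_def by (simp add: algebra_simps)
  finally show ?thesis using True unfolding L_def E_def by (simp add: powr_realpow)
qed simp

lemma lagfun_L1:
  "(\<integral>t. \<bar>indicator {0<..} t * laguerre_fun n t\<bar> \<partial>lborel) \<le> sqrt 38 * (real n + 2)"
proof -
  define Q where "Q \<alpha> j t = indicator {0<..} t * (t powr \<alpha> * exp (-t) * laguerre j \<alpha> t ^ 2)" for \<alpha> j t
  define R where "R t = 2 * Q 0 n t + 12 * (Q 2 n t + Q 2 (n-1) t + Q 2 (n-2) t)" for t
  have iQ: "integrable lborel (Q \<alpha> j)" if "\<alpha> > -1" for \<alpha> j
    unfolding Q_def using norm_L(1)[OF that] by simp
  have vQ: "(\<integral>t. Q \<alpha> j t \<partial>lborel) = Gamma (real j + \<alpha> + 1) / fact j" if "\<alpha> > -1" for \<alpha> j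
    unfolding Q_def using norm_L(2)[OF that] by simp
  have iR: "integrable lborel R" unfolding R_def using iQ by simp
  have vR: "(\<integral>t. R t \<partial>lborel) = 2 + 12 * ((real n + 1) * (real n + 2) + (real (n-1) + 1) * (real (n-1) + 2)
       + (real (n-2) + 1) * (real (n-2) + 2))"
  proof -
    have v0: "(\<integral>t. Q 0 n t \<partial>lborel) = 1" using vQ[of 0 n] Gamma_fact[of n, where 'a=real] by (simp add: add_ac)
    have v2: "(\<integral>t. Q 2 j t \<partial>lborel) = (real j + 1) * (real j + 2)" for j
      using vQ[of 2 j] Gamma_ratio2[of j] by simp
    have i0: "integrable lborel (Q 0 n)" by (rule iQ) simp
    have i2: "integrable lborel (Q 2 j)" for j by (rule iQ) simp
    show ?thesis unfolding R_def
      by (simp add: i0 i2 v0 v2 del: of_nat_diff)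
  qed
  have vRb: "(\<integral>t. R t \<partial>lborel) \<le> 38 * (real n + 2)^2"
  proof -
    have "(real (n-1) + 1) * (real (n-1) + 2) \<le> (real n + 2)^2"
      by (rule order_trans[of _ "(real n + 2) * (real n + 2)"]) (auto intro!: mult_mono simp: power2_eq_square)
    moreover have "(real (n-2) + 1) * (real (n-2) + 2) \<le> (real n + 2)^2"
      by (rule order_trans[of _ "(real n + 2) * (real n + 2)"]) (auto intro!: mult_mono simp: power2_eq_square)
    moreover have "(real n + 1) * (real n + 2) \<le> (real n + 2)^2"
      by (auto intro!: mult_mono simp: power2_eq_square)
    moreover have "2 \<le> 2 * (real n + 2)^2"
    proof -
      have h: "1 \<le> real n + 2" by simp
      have "1 * 1 \<le> (real n + 2) * (real n + 2)" by (rule mult_mono[OF h h]) auto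
      hence "1 \<le> (real n + 2) * (real n + 2)" by simp
      thus ?thesis by (simp add: power2_eq_square)
    qed
    ultimately show ?thesis unfolding vR by (intro lin2)
  qed
  have "(\<integral>t. \<bar>indicator {0<..} t * laguerre_fun n t\<bar> \<partial>lborel) \<le> sqrt ((\<integral>t. R t \<partial>lborel) * 1)"
  proof (rule L1_CS_bound)
    show "integrable lborel (\<lambda>t. indicator {0<..} t * laguerre_fun n t)"
    proof -
      have "integrable lborel (\<lambda>t. indicator {0<..} t * (1 * laguerre_fun n t) * exp (-(0 * t)))"
        by (rule lagfun_integrable) simp
      thus ?thesis by simp
    qed
    let ?u = "\<lambda>t. indicator {0<..} t * (exp (-t/2) * (1 + t) * laguerre n 0 t)"
    let ?v = "\<lambda>t::real. indicator {0<..} t * (1 / (1 + t))"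
    show "?u \<in> borel_measurable borel" unfolding laguerre_def by measurable
    have [measurable]: "(\<lambda>x::real. 1 / (1 + x)) \<in> borel_measurable borel"
      using borel_measurable_divide[of "\<lambda>x::real. 1" borel "\<lambda>x. (1+x)"] by auto
    show "?v \<in> borel_measurable borel" by measurable
    show "\<bar>indicator {0<..} t * laguerre_fun n t\<bar> = \<bar>?u t\<bar> * \<bar>?v t\<bar>" for t
    proof (cases "t > 0")
      case True
      have "?u t * ?v t = exp (-t/2) * laguerre n 0 t" using True by (simp add: field_simps)
      hence "\<bar>?u t\<bar> * \<bar>?v t\<bar> = \<bar>exp (-t/2) * laguerre n 0 t\<bar>" by (simp only: abs_mult[symmetric])
      thus ?thesis using True by (simp add: laguerre_fun_def)
    qed simp
    show "(\<integral>\<^sup>+t. ennreal ((?v t)^2) \<partial>lborel) \<le> ennreal 1" by (rule inv_sq_int)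
    have "(\<integral>\<^sup>+t. ennreal ((?u t)^2) \<partial>lborel) \<le> (\<integral>\<^sup>+t. ennreal (R t) \<partial>lborel)"
      by (intro nn_integral_mono ennreal_leI) (simp only: R_def Q_def u_sq_bound)
    also have "\<dots> = ennreal (\<integral>t. R t \<partial>lborel)"
    proof (intro nn_integral_eq_integral iR AE_I2)
      fix t show "0 \<le> R t" unfolding R_def Q_def by simp
    qed
    finally show "(\<integral>\<^sup>+t. ennreal ((?u t)^2) \<partial>lborel) \<le> ennreal (\<integral>t. R t \<partial>lborel)" .
    show "0 \<le> (\<integral>t. R t \<partial>lborel)" unfolding R_def Q_def by (intro integral_nonneg_AE AE_I2) simp
  qed simp
  also have "\<dots> \<le> sqrt (38 * (real n + 2)^2)" using vRb by simp
  also have "\<dots> = sqrt 38 * (real n + 2)" by (simp add: real_sqrt_mult)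
  finally show ?thesis .
qed

lemma summable_lin_geom:
  fixes r :: real
  assumes r: "0 \<le> r" "r < 1"
  shows "summable (\<lambda>n. r ^ n * (real n + 2))"
proof (rule summable_ratio_test[where c = "(1 + r) / 2" and N = "nat \<lceil>4 / (1 - r)\<rceil>"])
  show "(1 + r) / 2 < 1" using r by simp
  fix n assume n: "n \<ge> nat \<lceil>4 / (1 - r)\<rceil>"
  hence "real n \<ge> 4 / (1 - r)" by linarith
  hence "real n * (1 - r) \<ge> 4" using r by (simp add: field_simps)
  hence key: "r * (real n + 3) \<le> (1 + r) / 2 * (real n + 2)"
    using r by (simp add: field_simps)
  have "r ^ Suc n * (real (Suc n) + 2) = r ^ n * (r * (real n + 3))" by (simp add: algebra_simps)
  also have "\<dots> \<le> r ^ n * ((1 + r) / 2 * (real n + 2))"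
    using key r by (intro mult_left_mono) auto
  finally have F: "r ^ Suc n * (real (Suc n) + 2) \<le> (1 + r) / 2 * (r ^ n * (real n + 2))"
    by (simp add: mult_ac)
  have n1: "norm (r ^ Suc n * (real (Suc n) + 2)) = r ^ Suc n * (real (Suc n) + 2)" using r by simp
  have n2: "norm (r ^ n * (real n + 2)) = r ^ n * (real n + 2)" using r by simp
  show "norm (r ^ Suc n * (real (Suc n) + 2)) \<le> (1 + r) / 2 * norm (r ^ n * (real n + 2))"
    unfolding n1 n2 by (rule F)
qed

lemma part2:
  fixes a :: real
  assumes a: "a > 0"
  shows "L1_sums (\<lambda>n t. (a - 1/2) ^ n / (a + 1/2) ^ (n + 1) * laguerre_fun n t) (\<lambda>t. exp (- a * t))"
proof -
  define z where "z = (a - 1/2) / (a + 1/2)"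
  define c where "c n = (a - 1/2) ^ n / (a + 1/2) ^ (n + 1)" for n
  have ap: "a + 1/2 > 0" using a by simp
  have cz: "c n = z ^ n / (a + 1/2)" for n unfolding c_def z_def by (simp add: power_divide)
  have z: "\<bar>z\<bar> < 1" unfolding z_def using a ap by (simp add: abs_less_iff field_simps)
  have gpw: "indicator {0<..} t * exp (- a * t) * exp (-(s * t))
      = indicator {0<..} t * (t powr 0 * exp (-((a + s) * t)))" for t s
    by (cases "t > 0") (auto simp: exp_add[symmetric] algebra_simps)
  show ?thesis
  proof (rule L1_sums_abstract)
    show "integrable lborel (\<lambda>t. indicator {0<..} t * ((a - 1/2) ^ n / (a + 1/2) ^ (n + 1) * laguerre_fun n t))" for n
      using lagfun_integrable[of 0 "(a - 1/2) ^ n / (a + 1/2) ^ (n + 1)" n] by simp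
    have "integrable lborel (\<lambda>t. indicator {0<..} t * (t powr 0 * exp (-((a + 0) * t))))"
      by (rule gint(1)) (use a in auto)
    moreover have "indicator {0<..} t * exp (- a * t) = indicator {0<..} t * (t powr 0 * exp (-((a + 0) * t)))" for t
      by (cases "t > 0") auto
    ultimately show "integrable lborel (\<lambda>t. indicator {0<..} t * exp (- a * t))"
      by (simp only:)
  next
    fix k :: nat
    define s where "s = real k + 1"
    have s: "s > 0" unfolding s_def by simp
    define w where "w = (s - 1/2) / (s + 1/2)"
    have sp: "s + 1/2 > 0" using s by simp
    have w: "\<bar>w\<bar> < 1" unfolding w_def using s sp by (simp add: abs_less_iff field_simps)
    have zw: "\<bar>z * w\<bar> < 1"
    proof -
      have "\<bar>z\<bar> * \<bar>w\<bar> \<le> 1 * \<bar>w\<bar>" using z by (intro mult_right_mono) auto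
      thus ?thesis using w by (simp add: abs_mult)
    qed
    have "(\<lambda>n. 1 / ((a + 1/2) * (s + 1/2)) * (z * w) ^ n) sums (1 / ((a + 1/2) * (s + 1/2)) * (1 / (1 - z * w)))"
      by (intro sums_mult geometric_sums) (use zw in simp)
    moreover have "1 / ((a + 1/2) * (s + 1/2)) * (z * w) ^ n =
        (\<integral>t. indicator {0<..} t * (c n * laguerre_fun n t) * exp (-(s * t)) \<partial>lborel)" for n
    proof -
      have "(\<integral>t. indicator {0<..} t * (c n * laguerre_fun n t) * exp (-(s * t)) \<partial>lborel)
          = c n / (s + 1/2) * w ^ n"
        unfolding w_def by (rule lagfun_laplace) (use s in simp)
      also have "\<dots> = 1 / ((a + 1/2) * (s + 1/2)) * (z * w) ^ n"
        unfolding cz by (simp add: power_mult_distrib)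
      finally show ?thesis by simp
    qed
    moreover have "1 / ((a + 1/2) * (s + 1/2)) * (1 / (1 - z * w))
        = (\<integral>t. indicator {0<..} t * exp (- a * t) * exp (-(s * t)) \<partial>lborel)"
    proof -
      have "(\<integral>t. indicator {0<..} t * exp (- a * t) * exp (-(s * t)) \<partial>lborel)
          = (\<integral>t. indicator {0<..} t * (t powr 0 * exp (-((a + s) * t))) \<partial>lborel)"
        by (simp only: gpw)
      also have "\<dots> = Gamma (0 + 1) / (a + s) powr (0 + 1)"
        by (rule gint(2)) (use a s in auto)
      also have "\<dots> = 1 / (a + s)" using a s by simp
      also have "\<dots> = 1 / ((a + 1/2) * (s + 1/2)) * (1 / (1 - z * w))"
      proof -
        have zw': "z * w = ((a - 1/2) * (s - 1/2)) / ((a + 1/2) * (s + 1/2))"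
          unfolding z_def w_def by simp
        have "(a + 1/2) * (s + 1/2) * (1 - z * w) = (a + 1/2) * (s + 1/2) - (a - 1/2) * (s - 1/2)"
        proof -
          have gen: "X \<noteq> 0 \<Longrightarrow> X * (1 - Pp / X) = X - Pp" for X Pp :: real
            by (simp add: right_diff_distrib)
          show ?thesis unfolding zw' by (rule gen) (use ap sp in simp)
        qed
        also have "\<dots> = a + s" by (simp add: algebra_simps)
        finally have "(a + 1/2) * (s + 1/2) * (1 - z * w) = a + s" .
        thus ?thesis using ap sp a s by (simp add: field_simps)
      qed
      finally show ?thesis by simp
    qed
    ultimately show "(\<lambda>n. \<integral>t. indicator {0<..} t * ((a - 1/2) ^ n / (a + 1/2) ^ (n + 1) * laguerre_fun n t) * exp (-((real k + 1) * t)) \<partial>lborel)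
        sums (\<integral>t. indicator {0<..} t * exp (- a * t) * exp (-((real k + 1) * t)) \<partial>lborel)"
      unfolding s_def c_def by simp
  next
    have sg: "summable (\<lambda>n. sqrt 38 / (a + 1/2) * (\<bar>z\<bar> ^ n * (real n + 2)))"
      by (intro summable_mult summable_lin_geom) (use z in auto)
    show "summable (\<lambda>n. \<integral>t. \<bar>indicator {0<..} t * ((a - 1/2) ^ n / (a + 1/2) ^ (n + 1) * laguerre_fun n t)\<bar> \<partial>lborel)"
    proof (rule summable_comparison_test'[OF sg])
      fix n :: nat
      have "(\<integral>t. \<bar>indicator {0<..} t * (c n * laguerre_fun n t)\<bar> \<partial>lborel)
          = \<bar>c n\<bar> * (\<integral>t. \<bar>indicator {0<..} t * laguerre_fun n t\<bar> \<partial>lborel)"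
        by (simp add: abs_mult mult_ac)
      also have "\<dots> \<le> \<bar>c n\<bar> * (sqrt 38 * (real n + 2))"
        by (intro mult_left_mono lagfun_L1) simp
      also have "\<dots> = sqrt 38 / (a + 1/2) * (\<bar>z\<bar> ^ n * (real n + 2))"
        unfolding cz using ap by (simp add: abs_divide power_abs)
      finally show "norm (\<integral>t. \<bar>indicator {0<..} t * ((a - 1/2) ^ n / (a + 1/2) ^ (n + 1) * laguerre_fun n t)\<bar> \<partial>lborel)
          \<le> sqrt 38 / (a + 1/2) * (\<bar>z\<bar> ^ n * (real n + 2))"
        unfolding c_def by simp
    qed
  qed
qed

theorem theorem3p2:
  shows "(\<forall>\<alpha> \<beta>::real. \<alpha> > -1 \<and> 2 * \<beta> > \<alpha> \<longrightarrow>
            L1_sums (\<lambda>n t. ((\<alpha> - \<beta> + real n - 1) gchoose n) * ell n \<alpha> t) (I_fun (\<beta> + 1)))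
       \<and> (\<forall>\<alpha>::real. \<alpha> > 2 \<longrightarrow> L1_sums (\<lambda>n t. ell n \<alpha> t) (I_fun \<alpha>))
       \<and> (\<forall>a::real. a > 0 \<longrightarrow>
            L1_sums (\<lambda>n t. (a - 1/2) ^ n / (a + 1/2) ^ (n + 1) * laguerre_fun n t)
                    (\<lambda>t. exp (- a * t)))"
proof (intro conjI allI impI)
  fix \<alpha> \<beta> :: real
  assume "\<alpha> > -1 \<and> 2 * \<beta> > \<alpha>"
  thus "L1_sums (\<lambda>n t. ((\<alpha> - \<beta> + real n - 1) gchoose n) * ell n \<alpha> t) (I_fun (\<beta> + 1))"
    by (intro part1) auto
next
  fix \<alpha> :: real
  assume a: "\<alpha> > 2"
  have "L1_sums (\<lambda>n t. ((\<alpha> - (\<alpha> - 1) + real n - 1) gchoose n) * ell n \<alpha> t) (I_fun ((\<alpha> - 1) + 1))"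
    by (rule part1) (use a in auto)
  moreover have "((\<alpha> - (\<alpha> - 1) + real n - 1) gchoose n) = 1" for n
  proof -
    have "(\<alpha> - (\<alpha> - 1) + real n - 1) = real n" by simp
    hence "((\<alpha> - (\<alpha> - 1) + real n - 1) gchoose n) = (real n gchoose n)" by simp
    also have "\<dots> = real (n choose n)" by (simp add: binomial_gbinomial[symmetric])
    finally show ?thesis by simp
  qed
  ultimately show "L1_sums (\<lambda>n t. ell n \<alpha> t) (I_fun \<alpha>)" by simp
next
  fix a :: real assume "a > 0"
  thus "L1_sums (\<lambda>n t. (a - 1/2) ^ n / (a + 1/2) ^ (n + 1) * laguerre_fun n t) (\<lambda>t. exp (- a * t))"
    by (rule part2)
qed

end
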